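(* Let $d \geq 1$, let $X$ be a random vector in $\mathbb{R}^d$ with $\mathbb{E}\bigl(\lVert X \rVert^2\bigr) < \infty$ and mean $m = \mathbb{E}(X)$, and let $X_1, \dots, X_n$ be $n$ independent copies of $X$. Let $\delta \in (0,1)$ and assume we know $v$ such that \[ \sup_{\theta \in \mathbb{S}_d} \mathbb{E}\bigl( \langle \theta, X - m \rangle^2 \bigr) \leq v < \infty, \] where $\mathbb{S}_d = \{\theta \in \mathbb{R}^d : \lVert \theta \rVert = 1\}$. Let $\mu > 0$ and put \begin{align*} \lambda &= \mu^{-1} \sqrt{\frac{2 \log(\delta^{-1})}{a v n}}, & T &= \max\bigl\{ \mathbb{E}\bigl(\lVert X - m \rVert^2\bigr), v \bigr\},\\ a &= g_2(2\mu) \ \ (\geq 1), & b &= \exp(2\mu)\, g_1\Biggl( \mu^2 \sqrt{\frac{2 a v}{T \log(\delta^{-1})}} \Biggr) \ \ (\geq 1). \end{align*} Define the thresholded sample $Y_i = \frac{\psi(\lambda \lVert X_i \rVert)}{\lambda \lVert X_i \rVert} X_i$, $i = 1, \dots, n$, where $\psi(t) = \min\{t, 1\}$ for $t \geq 0$, and the estimator $\widehat{m} = \frac{1}{n}\sum_{i=1}^n Y_i$. Then with probability at least $1 - \delta$, \[ \lVert \widehat{m} - m \rVert \leq \sqrt{\frac{2 a v \log(\delta^{-1})}{n}} + \sqrt{\frac{b T}{n}} + \inf_{p \geq 1} \frac{C_p}{n^{p/2}} + \inf_{p \geq 2} \frac{C'_p}{n^{p/2}}, \] where the infima are over real $p$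 and \begin{align*} C_p &= \frac{1}{p+1}\biggl( \frac{p}{(p+1)\mu} \biggr)^p \biggl( \frac{2 \log(\delta^{-1})}{a v} \biggr)^{p/2} \sup_{\theta \in \mathbb{S}_d} \mathbb{E}\bigl( \lVert X \rVert^p \langle \theta, X - m \rangle_- \bigr),\\ C'_p &= \frac{1}{p+1}\biggl( \frac{p}{(p+1)\mu} \biggr)^p \biggl( \frac{2 \log(\delta^{-1})}{a v} \biggr)^{p/2} \mathbb{E}\bigl( \lVert X \rVert^p \bigr) \lVert m \rVert \Biggl( 1 + \sqrt{\frac{a \log(\delta^{-1})}{2 v n}}\, \lVert m \rVert \Biggr). \end{align*}
   Context: $\lVert \cdot \rVert$ and $\langle \cdot, \cdot \rangle$ are the Euclidean norm and inner product on $\mathbb{R}^d$. For $r \in \mathbb{R}$, $r_- = \max\{0, -r\}$ is the negative part. The functions $g_1(t) = \frac{1}{t}(\exp(t) - 1)$ and $g_2(t) = \frac{2}{t^2}(\exp(t) - 1 - t)$, $t \in \mathbb{R}$, are increasing and extended by continuity at $t=0$ with $g_1(0) = g_2(0) = 1$. The factor $\frac{\psi(\lambda \lVert x \rVert)}{\lambda \lVert x \rVert}$ is taken to be $1$ when $x = 0$, so that $Y_i$ is the projection of $X_i$ onto the closed ball of radius $1/\lambda$ centred at $0$. *)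

theory Defs
  imports "HOL-Probability.Probability"
begin

definition g1 :: "real \<Rightarrow> real" where
  "g1 t = (if t = 0 then 1 else (exp t - 1) / t)"

definition g2 :: "real \<Rightarrow> real" where
  "g2 t = (if t = 0 then 1 else 2 / t^2 * (exp t - 1 - t))"

definition psi :: "real \<Rightarrow> real" where
  "psi t = min t 1"

definition thresh :: "real \<Rightarrow> 'b::real_normed_vector \<Rightarrow> 'b" where
  "thresh lam x = (if x = 0 then x else (psi (lam * norm x) / (lam * norm x)) *\<^sub>R x)"

definition negpart :: "real \<Rightarrow> real" where
  "negpart r = max 0 (- r)"

end

theory Submission
  imports Defs
begin

lemma aux_f_nonneg: "0 \<le> (t - 1) * exp t + 1" for t :: real
proof (cases "t \<ge> 0")
  case True
  have "(\<lambda>t. (t - 1) * exp t + 1) 0 \<le> (\<lambda>t. (t - 1) * exp t + 1) t"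
  proof (rule DERIV_nonneg_imp_nondecreasing[OF True, where f="\<lambda>t. (t - 1) * exp t + 1"])
    fix x :: real assume "0 \<le> x"
    then show "\<exists>y. ((\<lambda>t. (t - 1) * exp t + 1) has_real_derivative y) (at x) \<and> 0 \<le> y"
      by (intro exI[of _ "x * exp x"]) (auto intro!: derivative_eq_intros simp: algebra_simps)
  qed
  then show ?thesis by simp
next
  case False
  then have t: "t \<le> 0" by simp
  have "(\<lambda>t. (t - 1) * exp t + 1) 0 \<le> (\<lambda>t. (t - 1) * exp t + 1) t"
  proof (rule DERIV_nonpos_imp_nonincreasing[OF t, where f="\<lambda>t. (t - 1) * exp t + 1"])
    fix x :: real assume "x \<le> 0"
    then show "\<exists>y. ((\<lambda>t. (t - 1) * exp t + 1) has_real_derivative y) (at x) \<and> y \<le> 0"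
      by (intro exI[of _ "x * exp x"]) (auto intro!: derivative_eq_intros simp: algebra_simps mult_nonpos_nonneg)
  qed
  then show ?thesis by simp
qed

lemma aux_r_nonneg: "0 \<le> t \<Longrightarrow> 0 \<le> (t - 2) * exp t + t + 2" for t :: real
proof -
  assume t: "0 \<le> t"
  have "(\<lambda>t. (t - 2) * exp t + t + 2) 0 \<le> (\<lambda>t. (t - 2) * exp t + t + 2) t"
  proof (rule DERIV_nonneg_imp_nondecreasing[OF t, where f="\<lambda>t. (t - 2) * exp t + t + 2"])
    fix x :: real
    show "\<exists>y. ((\<lambda>t. (t - 2) * exp t + t + 2) has_real_derivative y) (at x) \<and> 0 \<le> y"
      apply (rule exI[of _ "(x - 1) * exp x + 1"])
      using aux_f_nonneg[of x]
      by (auto intro!: derivative_eq_intros simp: algebra_simps)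
  qed
  then show ?thesis by simp
qed

lemma g1_mono_pos:
  fixes s S :: real
  assumes "0 < s" "s \<le> S"
  shows "(exp s - 1) / s \<le> (exp S - 1) / S"
proof -
  have "(\<lambda>t. (exp t - 1) / t) s \<le> (\<lambda>t. (exp t - 1) / t) S"
  proof (rule DERIV_nonneg_imp_nondecreasing[OF assms(2), where f="\<lambda>t. (exp t - 1) / t"])
    fix x assume x: "s \<le> x" "x \<le> S"
    with assms have "x > 0" by auto
    show "\<exists>y. ((\<lambda>t. (exp t - 1) / t) has_real_derivative y) (at x) \<and> 0 \<le> y"
      apply (rule exI[of _ "((x - 1) * exp x + 1) / x^2"])
      using \<open>x > 0\<close> aux_f_nonneg[of x]
      by (auto intro!: derivative_eq_intros simp: field_simps power2_eq_square)
  qed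
  then show ?thesis by simp
qed

lemma exp_sub1_le_g1:
  fixes s S :: real
  assumes "0 \<le> s" "s \<le> S"
  shows "exp s - 1 \<le> s * g1 S"
proof (cases "s = 0")
  case True then show ?thesis by simp
next
  case False
  with assms have "0 < s" "0 < S" by auto
  have "(exp s - 1) / s \<le> (exp S - 1) / S" by (rule g1_mono_pos) fact+
  then have "exp s - 1 \<le> s * ((exp S - 1) / S)" using \<open>0 < s\<close> by (simp add: field_simps)
  then show ?thesis using \<open>0 < S\<close> by (simp add: g1_def)
qed

lemma g1_ge1: "(0::real) \<le> S \<Longrightarrow> 1 \<le> g1 S"
proof -
  assume "0 \<le> S"
  show ?thesis
  proof (cases "S = 0")
    case False
    then have "S > 0" using \<open>0 \<le> S\<close> by auto
    have "1 + S \<le> exp S" by (rule exp_ge_add_one_self)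
    then show ?thesis using \<open>S > 0\<close> by (simp add: g1_def field_simps)
  qed (simp add: g1_def)
qed

lemma exp_taylor2_neg: "v \<le> 0 \<Longrightarrow> exp v - 1 - v \<le> v^2 / 2" for v :: real
proof -
  assume v: "v \<le> 0"
  have "(\<lambda>v. v^2/2 - exp v + 1 + v) 0 \<le> (\<lambda>v. v^2/2 - exp v + 1 + v) v"
  proof (rule DERIV_nonpos_imp_nonincreasing[OF v, where f="\<lambda>v. v^2/2 - exp v + 1 + v"])
    fix x :: real
    show "\<exists>y. ((\<lambda>v. v^2/2 - exp v + 1 + v) has_real_derivative y) (at x) \<and> y \<le> 0"
      apply (rule exI[of _ "x - exp x + 1"])
      using exp_ge_add_one_self[of x]
      by (auto intro!: derivative_eq_intros simp: algebra_simps)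
  qed
  then show ?thesis by simp
qed

lemma exp_taylor2_pos: "0 \<le> v \<Longrightarrow> v^2 / 2 \<le> exp v - 1 - v" for v :: real
proof -
  assume v: "0 \<le> v"
  have "(\<lambda>v. exp v - 1 - v - v^2/2) 0 \<le> (\<lambda>v. exp v - 1 - v - v^2/2) v"
  proof (rule DERIV_nonneg_imp_nondecreasing[OF v, where f="\<lambda>v. exp v - 1 - v - v^2/2"])
    fix x :: real
    show "\<exists>y. ((\<lambda>v. exp v - 1 - v - v^2/2) has_real_derivative y) (at x) \<and> 0 \<le> y"
      apply (rule exI[of _ "exp x - 1 - x"])
      using exp_ge_add_one_self[of x]
      by (auto intro!: derivative_eq_intros simp: algebra_simps)
  qed
  then show ?thesis by simp
qed

lemma g2_ge1: "(0::real) < V \<Longrightarrow> 1 \<le> g2 V"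
  using exp_taylor2_pos[of V] by (simp add: g2_def field_simps)

lemma g2_mono_pos:
  fixes s S :: real
  assumes "0 < s" "s \<le> S"
  shows "(exp s - 1 - s) / s^2 \<le> (exp S - 1 - S) / S^2"
proof -
  have "(\<lambda>t. (exp t - 1 - t) / t^2) s \<le> (\<lambda>t. (exp t - 1 - t) / t^2) S"
  proof (rule DERIV_nonneg_imp_nondecreasing[OF assms(2), where f="\<lambda>t. (exp t - 1 - t) / t^2"])
    fix x assume x: "s \<le> x" "x \<le> S"
    with assms have "x > 0" by auto
    show "\<exists>y. ((\<lambda>t. (exp t - 1 - t) / t^2) has_real_derivative y) (at x) \<and> 0 \<le> y"
      apply (rule exI[of _ "((x - 2) * exp x + x + 2) / x^3"])
      using \<open>x > 0\<close> aux_r_nonneg[of x]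
      by (auto intro!: derivative_eq_intros simp: field_simps power2_eq_square power3_eq_cube)
  qed
  then show ?thesis by simp
qed

lemma exp_taylor_g2:
  fixes v V :: real
  assumes "v \<le> V" "0 < V"
  shows "exp v - 1 - v \<le> v^2 / 2 * g2 V"
proof (cases "v \<le> 0")
  case True
  have "exp v - 1 - v \<le> v^2/2" by (rule exp_taylor2_neg[OF True])
  also have "\<dots> \<le> v^2/2 * g2 V" using g2_ge1[OF assms(2)]
    by (simp add: mult_le_cancel_left1)
  finally show ?thesis .
next
  case False
  then have "0 < v" by simp
  have "(exp v - 1 - v) / v^2 \<le> (exp V - 1 - V) / V^2" by (rule g2_mono_pos) (use \<open>0<v\<close> assms in auto)
  then have "exp v - 1 - v \<le> v^2 * ((exp V - 1 - V) / V^2)" using \<open>0 < v\<close> by (simp add: field_simps)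
  then show ?thesis using assms by (simp add: g2_def field_simps)
qed

lemma bernoulli_powr:
  fixes y q :: real
  assumes "0 < y" "1 \<le> q"
  shows "1 + q * (y - 1) \<le> y powr q"
proof -
  have "(y powr q) powr (1/q) * 1 powr (1 - 1/q) \<le> (1/q) * (y powr q) + (1 - 1/q) * 1"
    using assms by (intro Youngs_inequality_0) auto
  then have "y \<le> (1/q) * (y powr q) + (1 - 1/q)"
    using assms by (simp add: powr_powr)
  then have "q * (1 + q * (y - 1)) \<le> q * (y powr q)"
    using assms by (simp add: field_simps)
  then show ?thesis using assms by (simp add: mult_le_cancel_left_pos)
qed

lemma psi_bound:
  fixes p t :: real
  assumes "0 < p" "0 < t"
  shows "1 - psi t / t \<le> 1 / (p + 1) * (p / (p + 1)) powr p * t powr p"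
proof (cases "t \<le> 1")
  case True
  then show ?thesis using assms by (simp add: psi_def)
next
  case False
  define y where "y = t * p / (p + 1)"
  have y: "0 < y" using assms by (simp add: y_def)
  have "1 + (p+1) * (y - 1) \<le> y powr (p + 1)" by (rule bernoulli_powr) (use y assms in auto)
  also have "y powr (p + 1) = (p / (p + 1)) powr (p+1) * t powr (p + 1)"
  proof -
    have "t * p / (p + 1) = (p / (p + 1)) * t" by simp
    then show ?thesis unfolding y_def using assms by (simp only:) (rule powr_mult; simp)
  qed
  also have "\<dots> = p * (1 / (p + 1) * (p / (p + 1)) powr p * t powr p) * t"
    using assms by (simp add: powr_add field_simps)
  finally have *: "1 + (p+1) * (y - 1) \<le> p * (1 / (p + 1) * (p / (p + 1)) powr p * t powr p) * t" .
  have "1 + (p+1) * (y - 1) = p * t - p" unfolding y_def using assms by (simp add: field_simps)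
  with * have "p * t - p \<le> p * (1 / (p + 1) * (p / (p + 1)) powr p * t powr p) * t" by simp
  then have "p * (t - 1) \<le> p * ((1 / (p + 1) * (p / (p + 1)) powr p * t powr p) * t)"
    by (simp only: right_diff_distrib mult.assoc mult_1_right)
  then have "t - 1 \<le> (1 / (p + 1) * (p / (p + 1)) powr p * t powr p) * t"
    using assms by (simp only: mult_le_cancel_left_pos)
  then show ?thesis using False assms by (simp add: psi_def field_simps)
qed


definition gweight :: "real \<Rightarrow> 'd::euclidean_space \<Rightarrow> real" where
  "gweight \<beta> x = exp (- \<beta> * (norm x)^2 / 2)"

lemma gweight_pos: "0 < gweight \<beta> x"
  by (simp add: gweight_def)

lemma gweight_meas[measurable]: "gweight \<beta> \<in> borel_measurable borel"
  unfolding gweight_def[abs_def] by measurable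

lemma gauss1d_nn: 
  assumes "0 < \<beta>"
  shows "(\<integral>\<^sup>+ t. ennreal (exp (- \<beta> * t^2 / 2)) \<partial>lborel) = ennreal (sqrt (2 * pi / \<beta>))"
proof -
  have nd: "normal_density 0 (1 / sqrt \<beta>) t = exp (- \<beta> * t^2 / 2) / sqrt (2 * pi / \<beta>)" for t
    using assms by (simp add: normal_density_def real_sqrt_divide power_divide field_simps)
  have one: "(\<integral>\<^sup>+ t. ennreal (normal_density 0 (1 / sqrt \<beta>) t) \<partial>lborel) = 1"
    using assms by (subst nn_integral_eq_integral) auto
  have "(\<integral>\<^sup>+ t. ennreal (exp (- \<beta> * t^2 / 2)) \<partial>lborel)
      = (\<integral>\<^sup>+ t. ennreal (sqrt (2 * pi / \<beta>)) * ennreal (normal_density 0 (1 / sqrt \<beta>) t) \<partial>lborel)"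
    using assms by (intro nn_integral_cong) (simp add: nd ennreal_mult'[symmetric])
  also have "\<dots> = ennreal (sqrt (2 * pi / \<beta>))"
    by (subst nn_integral_cmult) (auto simp: one)
  finally show ?thesis .
qed

lemma norm_sum_Basis_sq:
  "(norm (\<Sum>b\<in>Basis. g b *\<^sub>R b :: 'd::euclidean_space))^2 = (\<Sum>b\<in>Basis. (g b)^2)"
  unfolding power2_norm_eq_inner by (subst euclidean_inner) (simp add: power2_eq_square)

lemma gZ_eq:
  assumes "0 < \<beta>"
  shows "(\<integral>\<^sup>+y. ennreal (gweight \<beta> y) \<partial>(lborel::'d::euclidean_space measure))
         = ennreal (sqrt (2 * pi / \<beta>) ^ DIM('d))"
proof -
  interpret P: product_sigma_finite "\<lambda>_::'d. lborel :: real measure"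
    by unfold_locales
  have "(\<integral>\<^sup>+y. ennreal (gweight \<beta> y) \<partial>(lborel::'d measure))
      = (\<integral>\<^sup>+g. ennreal (gweight \<beta> (\<Sum>b\<in>Basis. g b *\<^sub>R b :: 'd)) \<partial>(\<Pi>\<^sub>M b\<in>Basis. lborel))"
    by (subst lborel_eq) (subst nn_integral_distr; simp)
  also have "\<dots> = (\<integral>\<^sup>+g. (\<Prod>b\<in>(Basis::'d set). ennreal (exp (- \<beta> * (g b)^2 / 2))) \<partial>(\<Pi>\<^sub>M b\<in>Basis. lborel))"
  proof (intro nn_integral_cong)
    fix g :: "'d \<Rightarrow> real"
    have "gweight \<beta> (\<Sum>b\<in>Basis. g b *\<^sub>R b :: 'd) = exp (\<Sum>b\<in>(Basis::'d set). - \<beta> * (g b)^2 / 2)"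
      unfolding gweight_def norm_sum_Basis_sq
      by (simp add: sum_distrib_left sum_divide_distrib)
    also have "\<dots> = (\<Prod>b\<in>(Basis::'d set). exp (- \<beta> * (g b)^2 / 2))"
      by (simp add: exp_sum)
    finally show "ennreal (gweight \<beta> (\<Sum>b\<in>Basis. g b *\<^sub>R b :: 'd)) = (\<Prod>b\<in>(Basis::'d set). ennreal (exp (- \<beta> * (g b)^2 / 2)))"
      by (simp add: prod_ennreal)
  qed
  also have "\<dots> = (\<Prod>b\<in>(Basis::'d set). (\<integral>\<^sup>+ t. ennreal (exp (- \<beta> * t^2 / 2)) \<partial>lborel))"
    by (rule P.product_nn_integral_prod) auto
  also have "\<dots> = (\<Prod>b\<in>(Basis::'d set). ennreal (sqrt (2 * pi / \<beta>)))"
    by (rule prod.cong[OF refl]) (rule gauss1d_nn[OF assms])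
  also have "\<dots> = ennreal (sqrt (2 * pi / \<beta>) ^ DIM('d))"
    by (simp, rule ennreal_power) (use assms in simp)
  finally show ?thesis .
qed

definition gauss :: "real \<Rightarrow> 'd::euclidean_space measure" where
  "gauss \<beta> = density lborel (\<lambda>x. ennreal (gweight \<beta> x / sqrt (2 * pi / \<beta>) ^ DIM('d)))"

lemma sets_gauss[simp, measurable_cong]: "sets (gauss \<beta>) = sets borel"
  by (simp add: gauss_def)

lemma space_gauss[simp]: "space (gauss \<beta>) = UNIV"
  by (simp add: gauss_def)

lemma nn_integral_gauss:
  assumes "f \<in> borel_measurable borel"
  shows "(\<integral>\<^sup>+x. f x \<partial>gauss \<beta>) = (\<integral>\<^sup>+x. ennreal (gweight \<beta> x / sqrt (2 * pi / \<beta>) ^ DIM('d)) * f x \<partial>(lborel::'d::euclidean_space measure))"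
  unfolding gauss_def using assms by (subst nn_integral_density) auto

lemma prob_space_gauss:
  assumes "0 < \<beta>"
  shows "prob_space (gauss \<beta> :: 'd::euclidean_space measure)"
proof
  have c: "0 < sqrt (2 * pi / \<beta>) ^ DIM('d)" using assms by simp
  have "emeasure (gauss \<beta> :: 'd measure) (space (gauss \<beta>)) = (\<integral>\<^sup>+x. 1 \<partial>(gauss \<beta> :: 'd measure))"
    by simp
  also have "\<dots> = (\<integral>\<^sup>+x. ennreal (1 / sqrt (2 * pi / \<beta>) ^ DIM('d)) * ennreal (gweight \<beta> x) \<partial>(lborel::'d measure))"
    by (subst nn_integral_gauss) (auto intro!: nn_integral_cong simp: ennreal_mult'[symmetric] c less_imp_le)
  also have "\<dots> = 1"
  proof -
    have "ennreal (1 / sqrt (2 * pi / \<beta>) ^ DIM('d)) * ennreal (sqrt (2 * pi / \<beta>) ^ DIM('d))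
        = ennreal (1 / sqrt (2 * pi / \<beta>) ^ DIM('d) * sqrt (2 * pi / \<beta>) ^ DIM('d))"
      using c by (subst ennreal_mult) auto
    also have "\<dots> = 1" using c assms by simp
    finally show ?thesis
      by (subst nn_integral_cmult) (auto simp: gZ_eq assms)
  qed
  finally show "emeasure (gauss \<beta>) (space (gauss \<beta>) :: 'd set) = 1" .
qed

lemma gauss_shift:
  assumes "f \<in> borel_measurable borel" "0 < \<beta>"
  shows "(\<integral>\<^sup>+x. f x \<partial>(gauss \<beta> :: 'd::euclidean_space measure))
       = (\<integral>\<^sup>+x. f (c + x) * ennreal (exp (- \<beta> * (c \<bullet> x) - \<beta> * (norm c)^2 / 2)) \<partial>gauss \<beta>)"
proof -
  define K where "K = sqrt (2 * pi / \<beta>) ^ DIM('d)"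
  have K: "0 < K" using assms by (simp add: K_def)
  have w: "gweight \<beta> (c + x) = gweight \<beta> x * exp (- \<beta> * (c \<bullet> x) - \<beta> * (norm c)^2 / 2)" for x
  proof -
    have "(norm (c + x))^2 = (norm c)^2 + 2 * (c \<bullet> x) + (norm x)^2"
      by (simp add: power2_norm_eq_inner inner_simps inner_commute)
    then show ?thesis unfolding gweight_def by (simp add: exp_add[symmetric] field_simps)
  qed
  have "(\<integral>\<^sup>+x. f x \<partial>(gauss \<beta> :: 'd measure))
      = (\<integral>\<^sup>+x. ennreal (gweight \<beta> x / K) * f x \<partial>(lborel::'d measure))"
    unfolding K_def by (rule nn_integral_gauss[OF assms(1)])
  also have "\<dots> = (\<integral>\<^sup>+x. ennreal (gweight \<beta> (c + x) / K) * f (c + x) \<partial>(lborel::'d measure))"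
    using assms by (subst lborel_distr_plus[of c, symmetric]) (subst nn_integral_distr; simp)
  also have "\<dots> = (\<integral>\<^sup>+x. ennreal (gweight \<beta> x / K) * (f (c + x) * ennreal (exp (- \<beta> * (c \<bullet> x) - \<beta> * (norm c)^2 / 2))) \<partial>(lborel::'d measure))"
    using K by (intro nn_integral_cong) (simp add: w ennreal_mult'[symmetric] ennreal_mult mult_ac gweight_pos less_imp_le)
  also have "\<dots> = (\<integral>\<^sup>+x. f (c + x) * ennreal (exp (- \<beta> * (c \<bullet> x) - \<beta> * (norm c)^2 / 2)) \<partial>gauss \<beta>)"
    unfolding K_def using assms by (subst nn_integral_gauss) auto
  finally show ?thesis .
qed

lemma gauss_mgf:
  assumes "0 < \<beta>"
  shows "(\<integral>\<^sup>+x. ennreal (exp (z \<bullet> x)) \<partial>(gauss \<beta> :: 'd::euclidean_space measure)) = ennreal (exp ((norm z)^2 / (2 * \<beta>)))"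
proof -
  interpret prob_space "gauss \<beta> :: 'd measure" by (rule prob_space_gauss[OF assms])
  have "(\<integral>\<^sup>+x. ennreal (exp (z \<bullet> x)) \<partial>(gauss \<beta> :: 'd measure))
     = (\<integral>\<^sup>+x. ennreal (exp (z \<bullet> ((1/\<beta>) *\<^sub>R z + x))) * ennreal (exp (- \<beta> * (((1/\<beta>) *\<^sub>R z) \<bullet> x) - \<beta> * (norm ((1/\<beta>) *\<^sub>R z))^2 / 2)) \<partial>gauss \<beta>)"
    using assms by (intro gauss_shift) auto
  also have "\<dots> = (\<integral>\<^sup>+x. ennreal (exp ((norm z)^2 / (2 * \<beta>))) \<partial>(gauss \<beta> :: 'd measure))"
  proof (rule nn_integral_cong)
    fix x :: 'd
    have "z \<bullet> ((1/\<beta>) *\<^sub>R z + x) + (- \<beta> * (((1/\<beta>) *\<^sub>R z) \<bullet> x) - \<beta> * (norm ((1/\<beta>) *\<^sub>R z))^2 / 2)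
        = (norm z)^2 / (2 * \<beta>)"
    proof -
      have zz: "z \<bullet> z = norm z * norm z" by (metis power2_eq_square dot_square_norm)
      show ?thesis using assms by (simp add: inner_simps power2_eq_square field_simps zz)
    qed
    then show "ennreal (exp (z \<bullet> ((1/\<beta>) *\<^sub>R z + x))) * ennreal (exp (- \<beta> * (((1/\<beta>) *\<^sub>R z) \<bullet> x) - \<beta> * (norm ((1/\<beta>) *\<^sub>R z))^2 / 2))
        = ennreal (exp ((norm z)^2 / (2 * \<beta>)))"
      by (simp add: ennreal_mult'[symmetric] exp_add[symmetric])
  qed
  also have "\<dots> = ennreal (exp ((norm z)^2 / (2 * \<beta>)))"
    using emeasure_space_1 by simp
  finally show ?thesis .
qed

lemma gauss_reflect:
  assumes "f \<in> borel_measurable borel"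
  shows "(\<integral>\<^sup>+x. f (- x) \<partial>(gauss \<beta> :: 'd::euclidean_space measure)) = (\<integral>\<^sup>+x. f x \<partial>gauss \<beta>)"
proof -
  have L: "distr lborel borel uminus = (lborel :: 'd measure)"
    using lborel_affine[of "-1 :: real" "0 :: 'd"] by (simp add: density_1)
  define K where "K = sqrt (2 * pi / \<beta>) ^ DIM('d)"
  have "(\<integral>\<^sup>+x. f (- x) \<partial>(gauss \<beta> :: 'd measure)) = (\<integral>\<^sup>+x. ennreal (gweight \<beta> x / K) * f (- x) \<partial>(lborel::'d measure))"
    unfolding K_def using assms by (subst nn_integral_gauss) auto
  also have "\<dots> = (\<integral>\<^sup>+x. ennreal (gweight \<beta> (- x) / K) * f (- x) \<partial>(lborel::'d measure))"
    by (simp add: gweight_def)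
  also have "\<dots> = (\<integral>\<^sup>+x. ennreal (gweight \<beta> x / K) * f x \<partial>(lborel::'d measure))"
    using assms by (subst (2) L[symmetric]) (subst nn_integral_distr; simp)
  also have "\<dots> = (\<integral>\<^sup>+x. f x \<partial>gauss \<beta>)"
    unfolding K_def using assms by (subst nn_integral_gauss) auto
  finally show ?thesis .
qed


lemma gauss_lin_integrable:
  assumes "0 < \<beta>"
  shows "integrable (gauss \<beta> :: 'd::euclidean_space measure) (\<lambda>x. w \<bullet> x)"
proof (rule integrableI_bounded)
  show "(\<lambda>x. w \<bullet> x) \<in> borel_measurable (gauss \<beta> :: 'd measure)" by simp
  have "(\<integral>\<^sup>+x. ennreal (norm (w \<bullet> x)) \<partial>(gauss \<beta> :: 'd measure))
      \<le> (\<integral>\<^sup>+x. ennreal (exp (w \<bullet> x)) + ennreal (exp ((- w) \<bullet> x)) \<partial>gauss \<beta>)"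
  proof (rule nn_integral_mono)
    fix x :: 'd
    have a: "1 + w \<bullet> x \<le> exp (w \<bullet> x)" "1 + - (w \<bullet> x) \<le> exp (- (w \<bullet> x))"
      by (rule exp_ge_add_one_self)+
    have b: "0 < exp (w \<bullet> x)" "0 < exp (- (w \<bullet> x))" by simp_all
    have "\<bar>w \<bullet> x\<bar> \<le> exp (w \<bullet> x) + exp (- (w \<bullet> x))"
      unfolding abs_le_iff using a b by linarith
    then have "\<bar>w \<bullet> x\<bar> \<le> exp (w \<bullet> x) + exp ((- w) \<bullet> x)" by simp
    then show "ennreal (norm (w \<bullet> x)) \<le> ennreal (exp (w \<bullet> x)) + ennreal (exp ((- w) \<bullet> x))"
      by (simp add: ennreal_plus[symmetric] del: ennreal_plus)
  qed
  also have "\<dots> = ennreal (exp ((norm w)^2 / (2 * \<beta>))) + ennreal (exp ((norm (- w))^2 / (2 * \<beta>)))"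
    using gauss_mgf[OF assms, of w] gauss_mgf[OF assms, of "- w"]
    by (subst nn_integral_add) (auto simp del: inner_minus_left norm_minus_cancel)
  also have "\<dots> < \<infinity>" by simp
  finally show "(\<integral>\<^sup>+x. ennreal (norm (w \<bullet> x)) \<partial>(gauss \<beta> :: 'd measure)) < \<infinity>" .
qed

lemma gauss_lin_zero:
  assumes "0 < \<beta>"
  shows "(\<integral>x. w \<bullet> x \<partial>(gauss \<beta> :: 'd::euclidean_space measure)) = 0"
proof -
  have "(\<integral>\<^sup>+x. ennreal (w \<bullet> x) \<partial>(gauss \<beta> :: 'd measure)) = (\<integral>\<^sup>+x. ennreal (w \<bullet> (- x)) \<partial>gauss \<beta>)"
    by (rule gauss_reflect[symmetric, where f="\<lambda>x. ennreal (w \<bullet> x)"]) simp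
  also have "\<dots> = (\<integral>\<^sup>+x. ennreal (- (w \<bullet> x)) \<partial>gauss \<beta>)" by simp
  finally show ?thesis
    by (subst real_lebesgue_integral_def[OF gauss_lin_integrable[OF assms]]) simp
qed

lemma jensen_exp:
  assumes "prob_space N" "integrable N G"
  shows "ennreal (exp (\<integral>x. G x \<partial>N)) \<le> (\<integral>\<^sup>+x. ennreal (exp (G x)) \<partial>N)"
proof (cases "(\<integral>\<^sup>+x. ennreal (exp (G x)) \<partial>N) = \<infinity>")
  case True then show ?thesis by simp
next
  case False
  interpret prob_space N by fact
  define c where "c = (\<integral>x. G x \<partial>N)"
  have Gm: "G \<in> borel_measurable N" using assms(2) by simp
  have ie: "integrable N (\<lambda>x. exp (G x))"
    using False Gm by (intro integrableI_nonneg) (auto simp: top.not_eq_extremum)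
  have "(\<integral>x. exp c * (1 + G x - c) \<partial>N) \<le> (\<integral>x. exp (G x) \<partial>N)"
  proof (rule integral_mono)
    show "integrable N (\<lambda>x. exp c * (1 + G x - c))" using assms(2) by simp
    show "integrable N (\<lambda>x. exp (G x))" by fact
    fix x
    have "exp (G x - c) \<ge> 1 + (G x - c)" by (rule exp_ge_add_one_self)
    then have "exp c * (1 + (G x - c)) \<le> exp c * exp (G x - c)" by simp
    also have "\<dots> = exp (G x)" by (simp add: exp_diff)
    finally show "exp c * (1 + G x - c) \<le> exp (G x)" by (metis add_diff_eq)
  qed
  also have "(\<integral>x. exp c * (1 + G x - c) \<partial>N) = exp c"
    using assms(2) by (simp add: c_def prob_space algebra_simps)
  finally have "exp c \<le> (\<integral>x. exp (G x) \<partial>N)" by simp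
  then show ?thesis
    by (subst nn_integral_eq_integral[OF ie]) (auto simp: c_def)
qed

lemma gauss_jensen:
  fixes F :: "'d::euclidean_space \<Rightarrow> real"
  assumes "0 < \<beta>" "F \<in> borel_measurable borel"
    and "integrable (gauss \<beta>) (\<lambda>x. F (c + x) - \<beta> * (c \<bullet> x) - \<beta> * (norm c)^2 / 2)"
  shows "ennreal (exp (\<integral>x. F (c + x) - \<beta> * (c \<bullet> x) - \<beta> * (norm c)^2 / 2 \<partial>(gauss \<beta> :: 'd measure)))
         \<le> (\<integral>\<^sup>+x. ennreal (exp (F x)) \<partial>gauss \<beta>)"
proof -
  have "(\<integral>\<^sup>+x. ennreal (exp (F x)) \<partial>(gauss \<beta> :: 'd measure))
     = (\<integral>\<^sup>+x. ennreal (exp (F (c + x))) * ennreal (exp (- \<beta> * (c \<bullet> x) - \<beta> * (norm c)^2 / 2)) \<partial>gauss \<beta>)"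
    using assms by (intro gauss_shift) auto
  also have "\<dots> = (\<integral>\<^sup>+x. ennreal (exp (F (c + x) - \<beta> * (c \<bullet> x) - \<beta> * (norm c)^2 / 2)) \<partial>gauss \<beta>)"
    by (intro nn_integral_cong) (simp add: ennreal_mult'[symmetric] exp_add[symmetric] algebra_simps)
  finally show ?thesis
    using jensen_exp[OF prob_space_gauss[OF assms(1)] assms(3)] by simp
qed


definition alph :: "real \<Rightarrow> 'b::real_normed_vector \<Rightarrow> real" where
  "alph lam x = (if x = 0 then 0 else 1 - psi (lam * norm x) / (lam * norm x))"

lemma thresh_alph: "thresh lam x = (1 - alph lam x) *\<^sub>R x"
  by (simp add: thresh_def alph_def)

lemma alph_nonneg: "0 < lam \<Longrightarrow> 0 \<le> alph lam x"
  by (auto simp: alph_def psi_def min_def field_simps)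

lemma alph_le1: "0 < lam \<Longrightarrow> alph lam x \<le> 1"
  by (auto simp: alph_def psi_def min_def field_simps)

lemma thresh_meas[measurable]: "thresh lam \<in> (borel_measurable borel :: ('b::euclidean_space \<Rightarrow> 'b) set)"
  unfolding thresh_def[abs_def] psi_def by measurable

lemma alph_meas[measurable]: "alph lam \<in> (borel_measurable borel :: ('b::euclidean_space \<Rightarrow> real) set)"
  unfolding alph_def[abs_def] psi_def by measurable

lemma thresh_small: "0 < lam \<Longrightarrow> norm x \<le> 1 / lam \<Longrightarrow> thresh lam x = x"
  by (auto simp: thresh_def psi_def min_def field_simps)

lemma thresh_big: "0 < lam \<Longrightarrow> 1 / lam < norm x \<Longrightarrow> thresh lam x = (1 / (lam * norm x)) *\<^sub>R x"
  by (auto simp: thresh_def psi_def min_def field_simps)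

lemma thresh_norm: "0 < lam \<Longrightarrow> norm (thresh lam x) \<le> 1 / lam"
proof -
  assume l: "0 < lam"
  show ?thesis
  proof (cases "norm x \<le> 1 / lam")
    case True then show ?thesis using thresh_small[OF l True] by simp
  next
    case False
    then have "0 < norm x" using l by (smt (verit) divide_pos_pos)
    then show ?thesis using thresh_big[of lam x] l False by (simp add: field_simps)
  qed
qed

lemma thresh_closest:
  fixes x :: "'b::euclidean_space"
  assumes l: "0 < lam"
  shows "thresh lam x = closest_point (cball 0 (1 / lam)) x"
proof (rule closest_point_unique)
  show "convex (cball (0::'b) (1 / lam))" by simp
  show "closed (cball (0::'b) (1 / lam))" by simp
  show "thresh lam x \<in> cball 0 (1 / lam)" using thresh_norm[OF l, of x] by simp
  show "\<forall>z\<in>cball 0 (1 / lam). dist x (thresh lam x) \<le> dist x z"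
  proof
    fix z :: 'b assume z: "z \<in> cball 0 (1 / lam)"
    show "dist x (thresh lam x) \<le> dist x z"
    proof (cases "norm x \<le> 1 / lam")
      case True then show ?thesis using thresh_small[OF l True] by simp
    next
      case False
      then have nx: "0 < norm x" using l by (smt (verit) divide_pos_pos)
      have "x - thresh lam x = (1 - 1 / (lam * norm x)) *\<^sub>R x"
        using thresh_big[of lam x] l False by (simp add: algebra_simps)
      then have "dist x (thresh lam x) = \<bar>1 - 1 / (lam * norm x)\<bar> * norm x"
        by (simp add: dist_norm)
      also have "\<dots> = norm x - 1 / lam"
        using l nx False by (simp add: field_simps abs_if)
      also have "\<dots> \<le> norm x - norm z" using z by simp
      also have "\<dots> \<le> dist x z" by (simp add: dist_norm norm_triangle_ineq2)
      finally show ?thesis .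
    qed
  qed
qed

lemma thresh_lipschitz:
  fixes x y :: "'b::euclidean_space"
  assumes l: "0 < lam"
  shows "norm (thresh lam x - thresh lam y) \<le> norm (x - y)"
  using closest_point_lipschitz[of "cball (0::'b) (1 / lam)" x y] l
  by (simp add: thresh_closest[OF l] dist_norm)


locale pb = prob_space M for M :: "'a measure" +
  fixes X :: "'a \<Rightarrow> 'd::euclidean_space" and Xs :: "nat \<Rightarrow> 'a \<Rightarrow> 'd" and n :: nat and lam :: real
  assumes X_meas[measurable]: "X \<in> borel_measurable M"
    and n_pos: "n \<ge> 1"
    and Xs_meas[measurable]: "\<And>i. i < n \<Longrightarrow> Xs i \<in> borel_measurable M"
    and Xs_distr: "\<And>i. i < n \<Longrightarrow> distr M borel (Xs i) = distr M borel X"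
    and Xs_indep: "indep_vars (\<lambda>_. borel) Xs {..<n}"
    and lam_pos: "0 < lam"
begin

definition "Y \<omega> = thresh lam (X \<omega>)"
definition "EY = (\<integral>\<omega>. Y \<omega> \<partial>M)"
definition "Zc \<omega> = Y \<omega> - EY"
definition "J y = enn2real (\<integral>\<^sup>+\<omega>. ennreal (exp (lam * (y \<bullet> Zc \<omega>))) \<partial>M)"
definition "H y = lam * (y \<bullet> EY) + J y - 1"
definition "Phi \<omega> y = (\<Sum>i<n. lam * (y \<bullet> thresh lam (Xs i \<omega>))) - real n * H y"

lemma Y_meas[measurable]: "Y \<in> borel_measurable M"
  unfolding Y_def[abs_def] by measurable

lemma Y_bound: "norm (Y \<omega>) \<le> 1 / lam"
  unfolding Y_def using thresh_norm[OF lam_pos] .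

lemma Y_int: "integrable M Y"
  by (rule integrable_const_bound[where B="1/lam"]) (auto simp: Y_bound)

lemma EY_bound: "norm EY \<le> 1 / lam"
proof -
  have "norm EY \<le> (\<integral>\<omega>. norm (Y \<omega>) \<partial>M)" unfolding EY_def by (rule integral_norm_bound)
  also have "\<dots> \<le> (\<integral>\<omega>. 1 / lam \<partial>M)"
    by (rule integral_mono) (auto simp: Y_bound Y_int)
  finally show ?thesis by (simp add: prob_space)
qed

lemma Zc_meas[measurable]: "Zc \<in> borel_measurable M"
  unfolding Zc_def[abs_def] by measurable

lemma Zc_bound: "norm (Zc \<omega>) \<le> 2 / lam"
proof -
  have "norm (Zc \<omega>) \<le> norm (Y \<omega>) + norm EY" unfolding Zc_def by (rule norm_triangle_ineq4)
  also have "\<dots> \<le> 2 / lam" using Y_bound[of \<omega>] EY_bound by simp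
  finally show ?thesis .
qed

lemma Zc_int: "integrable M Zc"
  by (rule integrable_const_bound[where B="2/lam"]) (auto simp: Zc_bound)

lemma Zc_mean: "(\<integral>\<omega>. Zc \<omega> \<partial>M) = 0"
  unfolding Zc_def using Y_int by (simp add: EY_def prob_space)

lemma lin_bound: "lam * (y \<bullet> Zc \<omega>) \<le> 2 * norm y"
proof -
  have "lam * (y \<bullet> Zc \<omega>) \<le> lam * (norm y * norm (Zc \<omega>))"
    using lam_pos by (intro mult_left_mono norm_cauchy_schwarz) auto
  also have "\<dots> \<le> lam * (norm y * (2 / lam))"
    using lam_pos Zc_bound[of \<omega>] by (intro mult_left_mono) (auto intro: mult_left_mono)
  also have "\<dots> = 2 * norm y" using lam_pos by simp
  finally show ?thesis .
qed

lemma exp_lin_bound: "exp (lam * (y \<bullet> Zc \<omega>)) \<le> exp (2 * norm y)"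
  using lin_bound by simp

lemma expZ_int: "integrable M (\<lambda>\<omega>. exp (lam * (y \<bullet> Zc \<omega>)))"
  by (rule integrable_const_bound[where B="exp (2 * norm y)"]) (auto simp: lin_bound)

lemma J_eq: "J y = (\<integral>\<omega>. exp (lam * (y \<bullet> Zc \<omega>)) \<partial>M)"
  unfolding J_def by (subst nn_integral_eq_integral[OF expZ_int]) auto

lemma J_nn: "ennreal (J y) = (\<integral>\<^sup>+\<omega>. ennreal (exp (lam * (y \<bullet> Zc \<omega>))) \<partial>M)"
  unfolding J_eq by (subst nn_integral_eq_integral[OF expZ_int]) auto

lemma J_meas[measurable]: "J \<in> borel_measurable borel"
  unfolding J_def[abs_def] by measurable

lemma H_meas[measurable]: "H \<in> borel_measurable borel"
  unfolding H_def[abs_def] by measurable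

lemma mgf_Y_le: "(\<integral>\<omega>. exp (lam * (y \<bullet> Y \<omega>)) \<partial>M) \<le> exp (H y)"
proof -
  have "(\<integral>\<omega>. exp (lam * (y \<bullet> Y \<omega>)) \<partial>M) = (\<integral>\<omega>. exp (lam * (y \<bullet> EY)) * exp (lam * (y \<bullet> Zc \<omega>)) \<partial>M)"
    by (intro Bochner_Integration.integral_cong) (auto simp: Zc_def inner_diff_right algebra_simps exp_add[symmetric])
  also have "\<dots> = exp (lam * (y \<bullet> EY)) * J y" by (simp add: J_eq)
  also have "\<dots> \<le> exp (lam * (y \<bullet> EY)) * exp (J y - 1)"
    using exp_ge_add_one_self[of "J y - 1"] by (intro mult_left_mono) auto
  also have "\<dots> = exp (H y)" by (simp add: H_def exp_add[symmetric])
  finally show ?thesis .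
qed

lemma step_A: "(\<integral>\<^sup>+\<omega>. ennreal (exp (Phi \<omega> y)) \<partial>M) \<le> 1"
proof -
  have ind: "indep_vars (\<lambda>_. borel) (\<lambda>i \<omega>. ennreal (exp (lam * (y \<bullet> thresh lam (Xs i \<omega>))))) {..<n}"
    by (intro indep_vars_compose2[OF Xs_indep]) auto
  have same: "(\<integral>\<^sup>+\<omega>. ennreal (exp (lam * (y \<bullet> thresh lam (Xs i \<omega>)))) \<partial>M)
      = (\<integral>\<^sup>+\<omega>. ennreal (exp (lam * (y \<bullet> Y \<omega>))) \<partial>M)" if i: "i < n" for i
  proof -
    have "(\<integral>\<^sup>+\<omega>. ennreal (exp (lam * (y \<bullet> thresh lam (Xs i \<omega>)))) \<partial>M)
        = (\<integral>\<^sup>+z. ennreal (exp (lam * (y \<bullet> thresh lam z))) \<partial>distr M borel (Xs i))"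
      using i by (subst nn_integral_distr) auto
    also have "\<dots> = (\<integral>\<^sup>+z. ennreal (exp (lam * (y \<bullet> thresh lam z))) \<partial>distr M borel X)"
      using i by (simp add: Xs_distr)
    also have "\<dots> = (\<integral>\<^sup>+\<omega>. ennreal (exp (lam * (y \<bullet> Y \<omega>))) \<partial>M)"
      by (subst nn_integral_distr) (auto simp: Y_def)
    finally show ?thesis .
  qed
  have iY: "integrable M (\<lambda>\<omega>. exp (lam * (y \<bullet> Y \<omega>)))"
  proof (rule integrable_const_bound[where B="exp (norm y)"])
    show "AE \<omega> in M. norm (exp (lam * (y \<bullet> Y \<omega>))) \<le> exp (norm y)"
    proof
      fix \<omega>
      have "lam * (y \<bullet> Y \<omega>) \<le> lam * (norm y * norm (Y \<omega>))"
        using lam_pos by (intro mult_left_mono) (auto intro: norm_cauchy_schwarz)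
      also have "\<dots> \<le> lam * (norm y * (1 / lam))"
        using lam_pos Y_bound[of \<omega>] by (intro mult_left_mono) (auto intro: mult_left_mono)
      also have "\<dots> = norm y" using lam_pos by simp
      finally show "norm (exp (lam * (y \<bullet> Y \<omega>))) \<le> exp (norm y)" by simp
    qed
  qed simp
  have "(\<integral>\<^sup>+\<omega>. ennreal (exp (Phi \<omega> y)) \<partial>M)
      = (\<integral>\<^sup>+\<omega>. ennreal (exp (- real n * H y)) * (\<Prod>i<n. ennreal (exp (lam * (y \<bullet> thresh lam (Xs i \<omega>))))) \<partial>M)"
    by (intro nn_integral_cong)
       (simp add: Phi_def exp_diff exp_sum prod_ennreal ennreal_mult'[symmetric] exp_minus field_simps divide_ennreal)
  also have "\<dots> = ennreal (exp (- real n * H y)) * (\<Prod>i<n. \<integral>\<^sup>+\<omega>. ennreal (exp (lam * (y \<bullet> thresh lam (Xs i \<omega>)))) \<partial>M)"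
    by (subst nn_integral_cmult) (auto simp: indep_vars_nn_integral[OF _ ind])
  also have "\<dots> = ennreal (exp (- real n * H y)) * (\<Prod>i<n. \<integral>\<^sup>+\<omega>. ennreal (exp (lam * (y \<bullet> Y \<omega>))) \<partial>M)"
    by (simp add: same)
  also have "\<dots> = ennreal (exp (- real n * H y)) * ennreal ((\<integral>\<omega>. exp (lam * (y \<bullet> Y \<omega>)) \<partial>M) ^ n)"
    by (subst nn_integral_eq_integral[OF iY]) (auto simp: ennreal_power)
  also have "\<dots> \<le> ennreal (exp (- real n * H y)) * ennreal (exp (H y) ^ n)"
    by (intro mult_left_mono ennreal_leI power_mono mgf_Y_le) auto
  also have "\<dots> = 1"
    by (simp add: ennreal_mult'[symmetric] exp_of_nat_mult[symmetric] exp_add[symmetric])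
  finally show ?thesis .
qed

end


context pb
begin

definition "I \<beta> \<omega> = (\<integral>\<^sup>+x. ennreal (exp (Phi \<omega> x)) \<partial>(gauss \<beta> :: 'd measure))"

lemma Phi_meas[measurable]: "(\<lambda>(\<omega>, x). Phi \<omega> x) \<in> borel_measurable (M \<Otimes>\<^sub>M (gauss \<beta> :: 'd measure))"
  unfolding Phi_def by measurable

lemma Phi_meas2[measurable]: "Phi \<omega> \<in> borel_measurable (borel :: 'd measure)"
  unfolding Phi_def[abs_def] by measurable

lemma I_meas[measurable]: "0 < \<beta> \<Longrightarrow> I \<beta> \<in> borel_measurable M"
proof -
  assume b: "0 < \<beta>"
  interpret G: prob_space "gauss \<beta> :: 'd measure" by (rule prob_space_gauss[OF b])
  show ?thesis unfolding I_def[abs_def] by measurable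
qed

lemma step_B:
  assumes b: "0 < \<beta>"
  shows "(\<integral>\<^sup>+\<omega>. I \<beta> \<omega> \<partial>M) \<le> 1"
proof -
  interpret G: prob_space "gauss \<beta> :: 'd measure" by (rule prob_space_gauss[OF b])
  interpret P: pair_sigma_finite M "gauss \<beta> :: 'd measure" by unfold_locales
  have "(\<integral>\<^sup>+\<omega>. I \<beta> \<omega> \<partial>M) = (\<integral>\<^sup>+x. (\<integral>\<^sup>+\<omega>. ennreal (exp (Phi \<omega> x)) \<partial>M) \<partial>(gauss \<beta> :: 'd measure))"
    unfolding I_def by (rule P.Fubini'[symmetric]) measurable
  also have "\<dots> \<le> (\<integral>\<^sup>+x. 1 \<partial>(gauss \<beta> :: 'd measure))"
    by (intro nn_integral_mono step_A)
  also have "\<dots> = 1" using G.emeasure_space_1 by simp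
  finally show ?thesis .
qed

definition "Good \<beta> \<delta> = {\<omega> \<in> space M. ennreal \<delta> * I \<beta> \<omega> < 1}"

lemma step_C:
  assumes b: "0 < \<beta>" and d: "0 < \<delta>"
  shows "Good \<beta> \<delta> \<in> sets M" "1 - \<delta> \<le> prob (Good \<beta> \<delta>)"
proof -
  have [measurable]: "I \<beta> \<in> borel_measurable M" by (rule I_meas[OF b])
  define bad where "bad = {\<omega> \<in> space M. 1 \<le> ennreal \<delta> * I \<beta> \<omega>}"
  have bad_sets: "bad \<in> sets M" unfolding bad_def by measurable
  show gs: "Good \<beta> \<delta> \<in> sets M" unfolding Good_def by measurable
  have "emeasure M bad \<le> ennreal \<delta> * (\<integral>\<^sup>+ \<omega>. I \<beta> \<omega> * indicator (space M) \<omega> \<partial>M)"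
    unfolding bad_def by (rule nn_integral_Markov_inequality) auto
  also have "(\<integral>\<^sup>+ \<omega>. I \<beta> \<omega> * indicator (space M) \<omega> \<partial>M) = (\<integral>\<^sup>+ \<omega>. I \<beta> \<omega> \<partial>M)"
    by (intro nn_integral_cong) auto
  also have "ennreal \<delta> * \<dots> \<le> ennreal \<delta> * 1"
    by (intro mult_left_mono step_B[OF b]) auto
  finally have "emeasure M bad \<le> ennreal \<delta>" by simp
  then have pb: "prob bad \<le> \<delta>" using d by (simp add: emeasure_eq_measure)
  have "Good \<beta> \<delta> = space M - bad" unfolding Good_def bad_def by (auto simp: not_le)
  then have "prob (Good \<beta> \<delta>) = 1 - prob bad" using bad_sets by (simp add: prob_compl)
  then show "1 - \<delta> \<le> prob (Good \<beta> \<delta>)" using pb by simp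
qed

end


context pb
begin

definition "Q \<beta> c = (\<integral>\<omega>. exp (lam * (c \<bullet> Zc \<omega>) + lam^2 * (norm (Zc \<omega>))^2 / (2 * \<beta>)) \<partial>M)"

lemma Q_int:
  assumes b: "0 < \<beta>"
  shows "integrable M (\<lambda>\<omega>. exp (lam * (c \<bullet> Zc \<omega>) + lam^2 * (norm (Zc \<omega>))^2 / (2 * \<beta>)))"
proof (rule integrable_const_bound[where B="exp (2 * norm c + 2 / \<beta>)"])
  show "AE \<omega> in M. norm (exp (lam * (c \<bullet> Zc \<omega>) + lam^2 * (norm (Zc \<omega>))^2 / (2 * \<beta>))) \<le> exp (2 * norm c + 2 / \<beta>)"
  proof
    fix \<omega>
    have "(norm (Zc \<omega>))^2 \<le> (2 / lam)^2"
      using Zc_bound[of \<omega>] by (intro power_mono) auto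
    then have "lam^2 * (norm (Zc \<omega>))^2 \<le> lam^2 * (2 / lam)^2"
      by (intro mult_left_mono) auto
    also have "\<dots> = 4" using lam_pos by (simp add: power2_eq_square field_simps)
    finally have "lam^2 * (norm (Zc \<omega>))^2 / (2 * \<beta>) \<le> 4 / (2 * \<beta>)"
      using b by (intro divide_right_mono) auto
    then have "lam * (c \<bullet> Zc \<omega>) + lam^2 * (norm (Zc \<omega>))^2 / (2 * \<beta>) \<le> 2 * norm c + 2 / \<beta>"
      using lin_bound[of c \<omega>] by simp
    then show "norm (exp (lam * (c \<bullet> Zc \<omega>) + lam^2 * (norm (Zc \<omega>))^2 / (2 * \<beta>))) \<le> exp (2 * norm c + 2 / \<beta>)"
      by simp
  qed
qed simp

lemma J_shift_nn:
  assumes b: "0 < \<beta>"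
  shows "(\<integral>\<^sup>+x. ennreal (J (c + x)) \<partial>(gauss \<beta> :: 'd measure)) = ennreal (Q \<beta> c)"
proof -
  interpret G: prob_space "gauss \<beta> :: 'd measure" by (rule prob_space_gauss[OF b])
  interpret P: pair_sigma_finite M "gauss \<beta> :: 'd measure" by unfold_locales
  have "(\<integral>\<^sup>+x. ennreal (J (c + x)) \<partial>(gauss \<beta> :: 'd measure))
      = (\<integral>\<^sup>+x. (\<integral>\<^sup>+\<omega>. ennreal (exp (lam * ((c + x) \<bullet> Zc \<omega>))) \<partial>M) \<partial>(gauss \<beta> :: 'd measure))"
    by (simp add: J_nn)
  also have "\<dots> = (\<integral>\<^sup>+\<omega>. (\<integral>\<^sup>+x. ennreal (exp (lam * ((c + x) \<bullet> Zc \<omega>))) \<partial>(gauss \<beta> :: 'd measure)) \<partial>M)"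
    by (rule P.Fubini') measurable
  also have "\<dots> = (\<integral>\<^sup>+\<omega>. ennreal (exp (lam * (c \<bullet> Zc \<omega>) + lam^2 * (norm (Zc \<omega>))^2 / (2 * \<beta>))) \<partial>M)"
  proof (rule nn_integral_cong)
    fix \<omega>
    have "(\<integral>\<^sup>+x. ennreal (exp (lam * ((c + x) \<bullet> Zc \<omega>))) \<partial>(gauss \<beta> :: 'd measure))
        = (\<integral>\<^sup>+x. ennreal (exp (lam * (c \<bullet> Zc \<omega>))) * ennreal (exp ((lam *\<^sub>R Zc \<omega>) \<bullet> x)) \<partial>(gauss \<beta> :: 'd measure))"
      by (intro nn_integral_cong) (simp add: ennreal_mult'[symmetric] exp_add[symmetric] inner_simps inner_commute algebra_simps)
    also have "\<dots> = ennreal (exp (lam * (c \<bullet> Zc \<omega>))) * ennreal (exp ((norm (lam *\<^sub>R Zc \<omega>))^2 / (2 * \<beta>)))"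
      using gauss_mgf[OF b, of "lam *\<^sub>R Zc \<omega>"] by (subst nn_integral_cmult) auto
    also have "\<dots> = ennreal (exp (lam * (c \<bullet> Zc \<omega>) + lam^2 * (norm (Zc \<omega>))^2 / (2 * \<beta>)))"
      by (simp add: ennreal_mult'[symmetric] exp_add[symmetric] power_mult_distrib)
    finally show "(\<integral>\<^sup>+x. ennreal (exp (lam * ((c + x) \<bullet> Zc \<omega>))) \<partial>(gauss \<beta> :: 'd measure))
        = ennreal (exp (lam * (c \<bullet> Zc \<omega>) + lam^2 * (norm (Zc \<omega>))^2 / (2 * \<beta>)))" .
  qed
  also have "\<dots> = ennreal (Q \<beta> c)"
    unfolding Q_def by (subst nn_integral_eq_integral[OF Q_int[OF b]]) auto
  finally show ?thesis .
qed

lemma J_nonneg: "0 \<le> J y"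
  by (simp add: J_def)

lemma J_shift_int:
  assumes b: "0 < \<beta>"
  shows "integrable (gauss \<beta> :: 'd measure) (\<lambda>x. J (c + x))"
  and "(\<integral>x. J (c + x) \<partial>(gauss \<beta> :: 'd measure)) = Q \<beta> c"
proof -
  have Qnn: "0 \<le> Q \<beta> c" unfolding Q_def by simp
  show i: "integrable (gauss \<beta> :: 'd measure) (\<lambda>x. J (c + x))"
    using J_shift_nn[OF b, of c] by (intro integrableI_nonneg) (auto simp: J_nonneg)
  have "ennreal (\<integral>x. J (c + x) \<partial>(gauss \<beta> :: 'd measure)) = ennreal (Q \<beta> c)"
    using J_shift_nn[OF b, of c] by (subst (asm) nn_integral_eq_integral[OF i]) (auto simp: J_nonneg)
  then show "(\<integral>x. J (c + x) \<partial>(gauss \<beta> :: 'd measure)) = Q \<beta> c"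
    using Qnn by (subst (asm) ennreal_inj) (auto simp: J_nonneg intro: integral_nonneg_AE)
qed

lemma step_D:
  assumes b: "0 < \<beta>" and d: "0 < \<delta>" and \<omega>: "\<omega> \<in> Good \<beta> \<delta>"
  shows "lam * ((\<Sum>i<n. c \<bullet> thresh lam (Xs i \<omega>)) - real n * (c \<bullet> EY)) - real n * (Q \<beta> c - 1)
          - \<beta> * (norm c)^2 / 2 < ln (1 / \<delta>)"
proof -
  interpret G: prob_space "gauss \<beta> :: 'd measure" by (rule prob_space_gauss[OF b])
  define A0 where "A0 = lam * ((\<Sum>i<n. c \<bullet> thresh lam (Xs i \<omega>)) - real n * (c \<bullet> EY)) + real n - \<beta> * (norm c)^2 / 2"
  define w where "w = (\<Sum>i<n. lam *\<^sub>R thresh lam (Xs i \<omega>)) - (real n * lam) *\<^sub>R EY - \<beta> *\<^sub>R c"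
  have Geq: "Phi \<omega> (c + x) - \<beta> * (c \<bullet> x) - \<beta> * (norm c)^2 / 2 = A0 + w \<bullet> x - real n * J (c + x)" for x
    unfolding Phi_def H_def A0_def w_def
    by (simp add: inner_simps inner_sum_left inner_sum_right sum.distrib algebra_simps sum_distrib_left inner_commute)
  have iw: "integrable (gauss \<beta> :: 'd measure) (\<lambda>x. w \<bullet> x)" by (rule gauss_lin_integrable[OF b])
  have iJ: "integrable (gauss \<beta> :: 'd measure) (\<lambda>x. J (c + x))" by (rule J_shift_int[OF b])
  have iG: "integrable (gauss \<beta> :: 'd measure) (\<lambda>x. A0 + w \<bullet> x - real n * J (c + x))"
    using iw iJ by auto
  have intG: "(\<integral>x. A0 + w \<bullet> x - real n * J (c + x) \<partial>(gauss \<beta> :: 'd measure)) = A0 - real n * Q \<beta> c"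
    using iw iJ G.prob_space by (simp add: gauss_lin_zero[OF b] J_shift_int[OF b])
  have "ennreal (exp (\<integral>x. Phi \<omega> (c + x) - \<beta> * (c \<bullet> x) - \<beta> * (norm c)^2 / 2 \<partial>(gauss \<beta> :: 'd measure)))
        \<le> I \<beta> \<omega>"
    unfolding I_def by (rule gauss_jensen[OF b]) (auto simp: Geq iG)
  then have "ennreal (exp (A0 - real n * Q \<beta> c)) \<le> I \<beta> \<omega>"
    by (simp add: Geq intG)
  then have "ennreal \<delta> * ennreal (exp (A0 - real n * Q \<beta> c)) \<le> ennreal \<delta> * I \<beta> \<omega>"
    by (rule mult_left_mono) simp
  also have "\<dots> < 1" using \<omega> by (simp add: Good_def)
  finally have "\<delta> * exp (A0 - real n * Q \<beta> c) < 1"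
    using d by (simp add: ennreal_mult'[symmetric] ennreal_less_iff del: ennreal_mult')
  then have "exp (A0 - real n * Q \<beta> c) < exp (ln (1 / \<delta>))"
    using d by (simp add: field_simps)
  then have "A0 - real n * Q \<beta> c < ln (1 / \<delta>)" by simp
  then show ?thesis unfolding A0_def by (simp add: algebra_simps)
qed

end


context pb
begin

lemma Zc_sq_bound: "(norm (Zc \<omega>))^2 \<le> 4 / lam^2"
proof -
  have "(norm (Zc \<omega>))^2 \<le> (2 / lam)^2" using Zc_bound[of \<omega>] by (intro power_mono) auto
  then show ?thesis by (simp add: power_divide)
qed

lemma int_inner_Zc_sq: "integrable M (\<lambda>\<omega>. (\<theta> \<bullet> Zc \<omega>)^2)" if "norm \<theta> = 1" for \<theta>
proof (rule integrable_const_bound[where B="4 / lam^2"])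
  show "AE \<omega> in M. norm ((\<theta> \<bullet> Zc \<omega>)^2) \<le> 4 / lam^2"
  proof
    fix \<omega>
    have "\<bar>\<theta> \<bullet> Zc \<omega>\<bar> \<le> norm \<theta> * norm (Zc \<omega>)" by (rule Cauchy_Schwarz_ineq2)
    then have "(\<theta> \<bullet> Zc \<omega>)^2 \<le> (norm (Zc \<omega>))^2" using that
      by (metis abs_le_square_iff abs_norm_cancel mult_1)
    then show "norm ((\<theta> \<bullet> Zc \<omega>)^2) \<le> 4 / lam^2" using Zc_sq_bound[of \<omega>] by simp
  qed
qed simp

lemma int_norm_Zc_sq: "integrable M (\<lambda>\<omega>. (norm (Zc \<omega>))^2)"
  by (rule integrable_const_bound[where B="4 / lam^2"]) (auto simp: Zc_sq_bound)

lemma step_E: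
  assumes b: "0 < \<beta>" and mu: "0 < \<mu>" and th: "norm \<theta> = 1"
  shows "Q \<beta> (\<mu> *\<^sub>R \<theta>) - 1 \<le> g2 (2 * \<mu>) / 2 * lam^2 * \<mu>^2 * (\<integral>\<omega>. (\<theta> \<bullet> Zc \<omega>)^2 \<partial>M)
            + exp (2 * \<mu>) * g1 (2 / \<beta>) * lam^2 * (\<integral>\<omega>. (norm (Zc \<omega>))^2 \<partial>M) / (2 * \<beta>)"
proof -
  define v0 where "v0 \<omega> = lam * ((\<mu> *\<^sub>R \<theta>) \<bullet> Zc \<omega>)" for \<omega>
  define s where "s \<omega> = lam^2 * (norm (Zc \<omega>))^2 / (2 * \<beta>)" for \<omega>
  have iQ: "integrable M (\<lambda>\<omega>. exp (v0 \<omega> + s \<omega>))"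
    using Q_int[OF b, of "\<mu> *\<^sub>R \<theta>"] unfolding v0_def s_def .
  have iv0: "integrable M v0" unfolding v0_def using Zc_int by simp
  have Ev0: "(\<integral>\<omega>. v0 \<omega> \<partial>M) = 0" unfolding v0_def using Zc_int by (simp add: Zc_mean)
  have Qe: "Q \<beta> (\<mu> *\<^sub>R \<theta>) = (\<integral>\<omega>. exp (v0 \<omega> + s \<omega>) \<partial>M)"
    unfolding Q_def v0_def s_def ..
  have "(\<integral>\<omega>. exp (v0 \<omega> + s \<omega>) - 1 - v0 \<omega> \<partial>M) = (\<integral>\<omega>. exp (v0 \<omega> + s \<omega>) \<partial>M) - 1 - (\<integral>\<omega>. v0 \<omega> \<partial>M)"
    using iQ iv0 by (simp add: prob_space)
  then have "Q \<beta> (\<mu> *\<^sub>R \<theta>) - 1 = (\<integral>\<omega>. exp (v0 \<omega> + s \<omega>) - 1 - v0 \<omega> \<partial>M)"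
    using Qe Ev0 by simp
  also have "\<dots> \<le> (\<integral>\<omega>. g2 (2 * \<mu>) / 2 * lam^2 * \<mu>^2 * (\<theta> \<bullet> Zc \<omega>)^2
                    + exp (2 * \<mu>) * g1 (2 / \<beta>) * lam^2 / (2 * \<beta>) * (norm (Zc \<omega>))^2 \<partial>M)"
  proof (rule integral_mono)
    show "integrable M (\<lambda>\<omega>. exp (v0 \<omega> + s \<omega>) - 1 - v0 \<omega>)" using iQ iv0 by simp
    show "integrable M (\<lambda>\<omega>. g2 (2 * \<mu>) / 2 * lam^2 * \<mu>^2 * (\<theta> \<bullet> Zc \<omega>)^2
                    + exp (2 * \<mu>) * g1 (2 / \<beta>) * lam^2 / (2 * \<beta>) * (norm (Zc \<omega>))^2)"
      using int_inner_Zc_sq[OF th] int_norm_Zc_sq by simp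
    fix \<omega>
    have v0le: "v0 \<omega> \<le> 2 * \<mu>"
      using lin_bound[of "\<mu> *\<^sub>R \<theta>" \<omega>] mu th unfolding v0_def by simp
    have s0: "0 \<le> s \<omega>" unfolding s_def using b by simp
    have sle: "s \<omega> \<le> 2 / \<beta>"
    proof -
      have "lam^2 * (norm (Zc \<omega>))^2 \<le> lam^2 * (4 / lam^2)"
        using Zc_sq_bound[of \<omega>] by (intro mult_left_mono) auto
      also have "\<dots> = 4" using lam_pos by simp
      finally show ?thesis unfolding s_def using b by (simp add: field_simps)
    qed
    have A: "exp (v0 \<omega>) - 1 - v0 \<omega> \<le> (v0 \<omega>)^2 / 2 * g2 (2 * \<mu>)"
      by (rule exp_taylor_g2) (use v0le mu in auto)
    have B: "exp (s \<omega>) - 1 \<le> s \<omega> * g1 (2 / \<beta>)"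
      by (rule exp_sub1_le_g1[OF s0 sle])
    have B0: "0 \<le> exp (s \<omega>) - 1" using s0 by simp
    have C: "exp (v0 \<omega>) * (exp (s \<omega>) - 1) \<le> exp (2 * \<mu>) * (s \<omega> * g1 (2 / \<beta>))"
      using v0le B B0 by (intro mult_mono) auto
    have "exp (v0 \<omega> + s \<omega>) - 1 - v0 \<omega> = (exp (v0 \<omega>) - 1 - v0 \<omega>) + exp (v0 \<omega>) * (exp (s \<omega>) - 1)"
      by (simp add: exp_add algebra_simps)
    also have "\<dots> \<le> (v0 \<omega>)^2 / 2 * g2 (2 * \<mu>) + exp (2 * \<mu>) * (s \<omega> * g1 (2 / \<beta>))"
      using A C by linarith
    also have "\<dots> = g2 (2 * \<mu>) / 2 * lam^2 * \<mu>^2 * (\<theta> \<bullet> Zc \<omega>)^2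
                    + exp (2 * \<mu>) * g1 (2 / \<beta>) * lam^2 / (2 * \<beta>) * (norm (Zc \<omega>))^2"
      unfolding v0_def s_def by (simp add: power_mult_distrib field_simps)
    finally show "exp (v0 \<omega> + s \<omega>) - 1 - v0 \<omega> \<le> g2 (2 * \<mu>) / 2 * lam^2 * \<mu>^2 * (\<theta> \<bullet> Zc \<omega>)^2
                    + exp (2 * \<mu>) * g1 (2 / \<beta>) * lam^2 / (2 * \<beta>) * (norm (Zc \<omega>))^2" .
  qed
  also have "\<dots> = g2 (2 * \<mu>) / 2 * lam^2 * \<mu>^2 * (\<integral>\<omega>. (\<theta> \<bullet> Zc \<omega>)^2 \<partial>M)
            + exp (2 * \<mu>) * g1 (2 / \<beta>) * lam^2 * (\<integral>\<omega>. (norm (Zc \<omega>))^2 \<partial>M) / (2 * \<beta>)"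
    using int_inner_Zc_sq[OF th] int_norm_Zc_sq by simp
  finally show ?thesis .
qed

lemma var_inner_le:
  fixes u :: 'd
  assumes th: "norm \<theta> = 1"
  shows "(\<integral>\<omega>. (\<theta> \<bullet> Zc \<omega>)^2 \<partial>M) \<le> (\<integral>\<omega>. (\<theta> \<bullet> (Y \<omega> - u))^2 \<partial>M)"
proof -
  have eq: "(\<theta> \<bullet> (Y \<omega> - u))^2 = (\<theta> \<bullet> Zc \<omega>)^2 + 2 * (\<theta> \<bullet> (EY - u)) * (\<theta> \<bullet> Zc \<omega>) + (\<theta> \<bullet> (EY - u))^2" for \<omega>
    by (simp add: Zc_def inner_diff_right power2_eq_square algebra_simps)
  have "(\<integral>\<omega>. (\<theta> \<bullet> (Y \<omega> - u))^2 \<partial>M)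
      = (\<integral>\<omega>. (\<theta> \<bullet> Zc \<omega>)^2 \<partial>M) + 2 * (\<theta> \<bullet> (EY - u)) * (\<integral>\<omega>. \<theta> \<bullet> Zc \<omega> \<partial>M) + (\<theta> \<bullet> (EY - u))^2"
    unfolding eq using int_inner_Zc_sq[OF th] Zc_int by (simp add: prob_space)
  also have "(\<integral>\<omega>. \<theta> \<bullet> Zc \<omega> \<partial>M) = 0" using Zc_int by (simp add: Zc_mean)
  finally show ?thesis by simp
qed

lemma var_norm_le:
  fixes u :: 'd
  shows "(\<integral>\<omega>. (norm (Zc \<omega>))^2 \<partial>M) \<le> (\<integral>\<omega>. (norm (Y \<omega> - u))^2 \<partial>M)"
proof -
  have eq: "(norm (Y \<omega> - u))^2 = (norm (Zc \<omega>))^2 + 2 * ((EY - u) \<bullet> Zc \<omega>) + (norm (EY - u))^2" for \<omega>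
  proof -
    have "Y \<omega> - u = Zc \<omega> + (EY - u)" by (simp add: Zc_def)
    then show ?thesis by (simp add: power2_norm_eq_inner inner_simps inner_commute)
  qed
  have "(\<integral>\<omega>. (norm (Y \<omega> - u))^2 \<partial>M)
      = (\<integral>\<omega>. (norm (Zc \<omega>))^2 \<partial>M) + 2 * (\<integral>\<omega>. (EY - u) \<bullet> Zc \<omega> \<partial>M) + (norm (EY - u))^2"
    unfolding eq using int_norm_Zc_sq Zc_int by (simp add: prob_space)
  also have "(\<integral>\<omega>. (EY - u) \<bullet> Zc \<omega> \<partial>M) = 0" using Zc_int by (simp add: Zc_mean)
  finally show ?thesis by simp
qed

end


definition cp :: "real \<Rightarrow> real" where
  "cp p = 1 / (p + 1) * (p / (p + 1)) powr p"

lemma cp_nonneg: "0 < p \<Longrightarrow> 0 \<le> cp p"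
  by (simp add: cp_def)

lemma alph_le_powr:
  fixes x :: "'b::real_normed_vector"
  assumes "0 < p" "0 < lam"
  shows "alph lam x \<le> cp p * lam powr p * norm x powr p"
proof (cases "x = 0")
  case True then show ?thesis using assms by (simp add: alph_def cp_def)
next
  case False
  then have t: "0 < lam * norm x" using assms by simp
  have "alph lam x = 1 - psi (lam * norm x) / (lam * norm x)" using False by (simp add: alph_def)
  also have "\<dots> \<le> cp p * (lam * norm x) powr p"
    using psi_bound[OF assms(1) t] by (simp add: cp_def)
  also have "(lam * norm x) powr p = lam powr p * norm x powr p"
    using assms by (simp add: powr_mult)
  finally show ?thesis by (simp add: mult.assoc)
qed

lemma sq_convex_id: "((1 - a) * x + a * y)^2 = (1 - a) * x^2 + a * y^2 - a * (1 - a) * (x - y)^2" for a x y :: real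
  by (simp add: power2_eq_square algebra_simps)

locale pb2 = pb +
  assumes X_sq: "integrable M (\<lambda>\<omega>. (norm (X \<omega>))^2)"
begin

lemma normX_int: "integrable M (\<lambda>\<omega>. norm (X \<omega>))"
  by (rule square_integrable_imp_integrable) (use X_sq in simp_all)

lemma X_int: "integrable M X"
  using normX_int integrable_norm_iff[of X M] by simp

lemma sqdiff_int: "integrable M (\<lambda>\<omega>. (norm (X \<omega> - u))^2)"
proof (rule Bochner_Integration.integrable_bound)
  show "integrable M (\<lambda>\<omega>. 2 * (norm (X \<omega>))^2 + 2 * (norm u)^2)" using X_sq by simp
  show "AE \<omega> in M. norm ((norm (X \<omega> - u))^2) \<le> norm (2 * (norm (X \<omega>))^2 + 2 * (norm u)^2)"
  proof
    fix \<omega>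
    have "norm (X \<omega> - u) \<le> norm (X \<omega>) + norm u" by (rule norm_triangle_ineq4)
    then have "(norm (X \<omega> - u))^2 \<le> (norm (X \<omega>) + norm u)^2" by (intro power_mono) auto
    also have "\<dots> \<le> 2 * (norm (X \<omega>))^2 + 2 * (norm u)^2"
    proof -
      have "0 \<le> (norm (X \<omega>) - norm u)^2" by simp
      then show ?thesis by (simp add: power2_eq_square algebra_simps)
    qed
    finally show "norm ((norm (X \<omega> - u))^2) \<le> norm (2 * (norm (X \<omega>))^2 + 2 * (norm u)^2)" by simp
  qed
qed simp

lemma var_norm_X: "(\<integral>\<omega>. (norm (Zc \<omega>))^2 \<partial>M) \<le> (\<integral>\<omega>. (norm (X \<omega> - u))^2 \<partial>M)"
proof -
  have iY: "integrable M (\<lambda>\<omega>. (norm (Y \<omega> - thresh lam u))^2)"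
  proof (rule integrable_const_bound[where B="(1 / lam + norm (thresh lam u))^2"])
    show "AE \<omega> in M. norm ((norm (Y \<omega> - thresh lam u))^2) \<le> (1 / lam + norm (thresh lam u))^2"
    proof
      fix \<omega>
      have "norm (Y \<omega> - thresh lam u) \<le> norm (Y \<omega>) + norm (thresh lam u)" by (rule norm_triangle_ineq4)
      also have "\<dots> \<le> 1 / lam + norm (thresh lam u)" using Y_bound[of \<omega>] by simp
      finally show "norm ((norm (Y \<omega> - thresh lam u))^2) \<le> (1 / lam + norm (thresh lam u))^2"
        by (simp add: power_mono)
    qed
  qed simp
  have "(\<integral>\<omega>. (norm (Zc \<omega>))^2 \<partial>M) \<le> (\<integral>\<omega>. (norm (Y \<omega> - thresh lam u))^2 \<partial>M)"
    by (rule var_norm_le)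
  also have "\<dots> \<le> (\<integral>\<omega>. (norm (X \<omega> - u))^2 \<partial>M)"
  proof (rule integral_mono[OF iY sqdiff_int])
    fix \<omega>
    show "(norm (Y \<omega> - thresh lam u))^2 \<le> (norm (X \<omega> - u))^2"
      unfolding Y_def using thresh_lipschitz[OF lam_pos, of "X \<omega>" u] by (intro power_mono) auto
  qed
  finally show ?thesis .
qed

lemma alphX_int: "integrable M (\<lambda>\<omega>. alph lam (X \<omega>))"
  by (rule integrable_const_bound[where B=1]) (auto simp: alph_nonneg alph_le1 lam_pos)

lemma inner_sq_int: "norm \<theta> = 1 \<Longrightarrow> integrable M (\<lambda>\<omega>. (\<theta> \<bullet> (X \<omega> - u))^2)"
proof (rule Bochner_Integration.integrable_bound[OF sqdiff_int[of u]])
  assume th: "norm \<theta> = 1"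
  show "AE \<omega> in M. norm ((\<theta> \<bullet> (X \<omega> - u))^2) \<le> norm ((norm (X \<omega> - u))^2)"
  proof
    fix \<omega>
    have "\<bar>\<theta> \<bullet> (X \<omega> - u)\<bar> \<le> norm (X \<omega> - u)" using Cauchy_Schwarz_ineq2[of \<theta> "X \<omega> - u"] th by simp
    then have "\<bar>\<theta> \<bullet> (X \<omega> - u)\<bar>^2 \<le> (norm (X \<omega> - u))^2" by (intro power_mono) auto
    then have "(\<theta> \<bullet> (X \<omega> - u))^2 \<le> (norm (X \<omega> - u))^2" by simp
    then show "norm ((\<theta> \<bullet> (X \<omega> - u))^2) \<le> norm ((norm (X \<omega> - u))^2)" by simp
  qed
qed simp

lemma var_inner_X:
  assumes th: "norm \<theta> = 1"
  shows "(\<integral>\<omega>. (\<theta> \<bullet> Zc \<omega>)^2 \<partial>M) \<le> (\<integral>\<omega>. (\<theta> \<bullet> (X \<omega> - u))^2 \<partial>M) + (norm u)^2 * (\<integral>\<omega>. alph lam (X \<omega>) \<partial>M)"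
proof -
  have iY: "integrable M (\<lambda>\<omega>. (\<theta> \<bullet> (Y \<omega> - u))^2)"
  proof (rule integrable_const_bound[where B="(1 / lam + norm u)^2"])
    show "AE \<omega> in M. norm ((\<theta> \<bullet> (Y \<omega> - u))^2) \<le> (1 / lam + norm u)^2"
    proof
      fix \<omega>
      have "\<bar>\<theta> \<bullet> (Y \<omega> - u)\<bar> \<le> norm \<theta> * norm (Y \<omega> - u)" by (rule Cauchy_Schwarz_ineq2)
      also have "\<dots> \<le> norm (Y \<omega>) + norm u" using th norm_triangle_ineq4[of "Y \<omega>" u] by simp
      also have "\<dots> \<le> 1 / lam + norm u" using Y_bound[of \<omega>] by simp
      finally have "\<bar>\<theta> \<bullet> (Y \<omega> - u)\<bar> \<le> 1 / lam + norm u" .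
      then have "\<bar>\<theta> \<bullet> (Y \<omega> - u)\<bar>^2 \<le> (1 / lam + norm u)^2"
        by (intro power_mono) auto
      then show "norm ((\<theta> \<bullet> (Y \<omega> - u))^2) \<le> (1 / lam + norm u)^2"
        by simp
    qed
  qed simp
  have "(\<integral>\<omega>. (\<theta> \<bullet> Zc \<omega>)^2 \<partial>M) \<le> (\<integral>\<omega>. (\<theta> \<bullet> (Y \<omega> - u))^2 \<partial>M)"
    by (rule var_inner_le[OF th])
  also have "\<dots> \<le> (\<integral>\<omega>. (\<theta> \<bullet> (X \<omega> - u))^2 + (norm u)^2 * alph lam (X \<omega>) \<partial>M)"
  proof (rule integral_mono[OF iY])
    show "integrable M (\<lambda>\<omega>. (\<theta> \<bullet> (X \<omega> - u))^2 + (norm u)^2 * alph lam (X \<omega>))"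
      using inner_sq_int[OF th] alphX_int by simp
    fix \<omega>
    define al where "al = alph lam (X \<omega>)"
    define A where "A = \<theta> \<bullet> (X \<omega> - u)"
    define B where "B = - (\<theta> \<bullet> u)"
    have al: "0 \<le> al" "al \<le> 1" unfolding al_def using lam_pos by (auto simp: alph_nonneg alph_le1)
    have e: "\<theta> \<bullet> (Y \<omega> - u) = (1 - al) * A + al * B"
      unfolding Y_def thresh_alph al_def A_def B_def by (simp add: inner_simps algebra_simps)
    have "(\<theta> \<bullet> (Y \<omega> - u))^2 = (1 - al) * A^2 + al * B^2 - al * (1 - al) * (A - B)^2"
      unfolding e by (rule sq_convex_id)
    also have "\<dots> \<le> (1 - al) * A^2 + al * B^2"
      using al by (simp add: mult_nonneg_nonneg)
    also have "\<dots> \<le> A^2 + al * (norm u)^2"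
    proof -
      have "\<bar>B\<bar> \<le> norm u" unfolding B_def using Cauchy_Schwarz_ineq2[of \<theta> u] th by simp
      then have "\<bar>B\<bar>^2 \<le> (norm u)^2" by (intro power_mono) auto
      then have "B^2 \<le> (norm u)^2" by simp
      then have "al * B^2 \<le> al * (norm u)^2" using al by (intro mult_left_mono) auto
      moreover have "(1 - al) * A^2 \<le> A^2"
      proof -
        have "0 \<le> al * A^2" using al by simp
        then show ?thesis by (simp add: algebra_simps)
      qed
      ultimately show ?thesis by linarith
    qed
    finally show "(\<theta> \<bullet> (Y \<omega> - u))^2 \<le> (\<theta> \<bullet> (X \<omega> - u))^2 + (norm u)^2 * alph lam (X \<omega>)"
      unfolding A_def al_def by (simp only: mult.commute)
  qed
  also have "\<dots> = (\<integral>\<omega>. (\<theta> \<bullet> (X \<omega> - u))^2 \<partial>M) + (norm u)^2 * (\<integral>\<omega>. alph lam (X \<omega>) \<partial>M)"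
    using inner_sq_int[OF th] alphX_int by simp
  finally show ?thesis .
qed

lemma negpart_int: "integrable M (\<lambda>\<omega>. alph lam (X \<omega>) * negpart (\<theta> \<bullet> (X \<omega> - u)))"
proof (rule Bochner_Integration.integrable_bound)
  show "integrable M (\<lambda>\<omega>. norm \<theta> * (norm (X \<omega>) + norm u))" using normX_int by simp
  show "(\<lambda>\<omega>. alph lam (X \<omega>) * negpart (\<theta> \<bullet> (X \<omega> - u))) \<in> borel_measurable M"
    unfolding negpart_def by measurable
  show "AE \<omega> in M. norm (alph lam (X \<omega>) * negpart (\<theta> \<bullet> (X \<omega> - u))) \<le> norm (norm \<theta> * (norm (X \<omega>) + norm u))"
  proof
    fix \<omega>
    have a: "0 \<le> alph lam (X \<omega>)" "alph lam (X \<omega>) \<le> 1" using lam_pos by (auto simp: alph_nonneg alph_le1)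
    have n: "0 \<le> negpart (\<theta> \<bullet> (X \<omega> - u))" "negpart (\<theta> \<bullet> (X \<omega> - u)) \<le> \<bar>\<theta> \<bullet> (X \<omega> - u)\<bar>"
      by (auto simp: negpart_def)
    have "alph lam (X \<omega>) * negpart (\<theta> \<bullet> (X \<omega> - u)) \<le> 1 * negpart (\<theta> \<bullet> (X \<omega> - u))"
      using a(2) n(1) by (rule mult_right_mono)
    also have "\<dots> \<le> \<bar>\<theta> \<bullet> (X \<omega> - u)\<bar>" using n(2) by simp
    also have "\<dots> \<le> norm \<theta> * norm (X \<omega> - u)" by (rule Cauchy_Schwarz_ineq2)
    also have "\<dots> \<le> norm \<theta> * (norm (X \<omega>) + norm u)" by (intro mult_left_mono norm_triangle_ineq4) auto
    finally have le: "alph lam (X \<omega>) * negpart (\<theta> \<bullet> (X \<omega> - u)) \<le> norm \<theta> * (norm (X \<omega>) + norm u)" .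
    have "0 \<le> alph lam (X \<omega>) * negpart (\<theta> \<bullet> (X \<omega> - u))" using a(1) n(1) by simp
    with le show "norm (alph lam (X \<omega>) * negpart (\<theta> \<bullet> (X \<omega> - u))) \<le> norm (norm \<theta> * (norm (X \<omega>) + norm u))"
      by simp
  qed
qed

lemma bias_bound:
  assumes m: "m = (\<integral>\<omega>. X \<omega> \<partial>M)" and th: "norm \<theta> = 1"
  shows "\<theta> \<bullet> (EY - m) \<le> (\<integral>\<omega>. alph lam (X \<omega>) * negpart (\<theta> \<bullet> (X \<omega> - m)) \<partial>M)
                          + norm m * (\<integral>\<omega>. alph lam (X \<omega>) \<partial>M)"
proof -
  have "\<theta> \<bullet> (EY - m) = (\<integral>\<omega>. \<theta> \<bullet> (Y \<omega> - X \<omega>) \<partial>M)"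
    unfolding EY_def m using Y_int X_int by simp
  also have "\<dots> \<le> (\<integral>\<omega>. alph lam (X \<omega>) * negpart (\<theta> \<bullet> (X \<omega> - m)) + norm m * alph lam (X \<omega>) \<partial>M)"
  proof (rule integral_mono)
    show "integrable M (\<lambda>\<omega>. \<theta> \<bullet> (Y \<omega> - X \<omega>))" using Y_int X_int by simp
    show "integrable M (\<lambda>\<omega>. alph lam (X \<omega>) * negpart (\<theta> \<bullet> (X \<omega> - m)) + norm m * alph lam (X \<omega>))"
      using negpart_int alphX_int by simp
    fix \<omega>
    define al where "al = alph lam (X \<omega>)"
    have al: "0 \<le> al" unfolding al_def using lam_pos by (simp add: alph_nonneg)
    have "\<theta> \<bullet> (Y \<omega> - X \<omega>) = - al * (\<theta> \<bullet> (X \<omega> - m)) - al * (\<theta> \<bullet> m)"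
      unfolding Y_def thresh_alph al_def by (simp add: inner_simps algebra_simps)
    also have "\<dots> \<le> al * negpart (\<theta> \<bullet> (X \<omega> - m)) + norm m * al"
    proof -
      have "- (\<theta> \<bullet> (X \<omega> - m)) \<le> negpart (\<theta> \<bullet> (X \<omega> - m))" by (simp add: negpart_def)
      then have "al * (- (\<theta> \<bullet> (X \<omega> - m))) \<le> al * negpart (\<theta> \<bullet> (X \<omega> - m))"
        using al by (rule mult_left_mono)
      then have "- al * (\<theta> \<bullet> (X \<omega> - m)) \<le> al * negpart (\<theta> \<bullet> (X \<omega> - m))" by simp
      moreover have "- al * (\<theta> \<bullet> m) \<le> norm m * al"
      proof -
        have "- (\<theta> \<bullet> m) \<le> norm m" using Cauchy_Schwarz_ineq2[of \<theta> m] th by simp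
        then have "al * (- (\<theta> \<bullet> m)) \<le> al * norm m" using al by (rule mult_left_mono)
        then show ?thesis by (simp add: mult.commute)
      qed
      ultimately show ?thesis by linarith
    qed
    finally show "\<theta> \<bullet> (Y \<omega> - X \<omega>) \<le> alph lam (X \<omega>) * negpart (\<theta> \<bullet> (X \<omega> - m)) + norm m * alph lam (X \<omega>)"
      by (simp add: al_def)
  qed
  also have "\<dots> = (\<integral>\<omega>. alph lam (X \<omega>) * negpart (\<theta> \<bullet> (X \<omega> - m)) \<partial>M) + norm m * (\<integral>\<omega>. alph lam (X \<omega>) \<partial>M)"
    using negpart_int alphX_int by simp
  finally show ?thesis .
qed

end


lemma g1_mono: "0 \<le> s \<Longrightarrow> s \<le> S \<Longrightarrow> g1 s \<le> g1 S" for s S :: real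
proof -
  assume s: "0 \<le> s" "s \<le> S"
  show ?thesis
  proof (cases "s = 0")
    case True then show ?thesis using g1_ge1[of S] s by (simp add: g1_def)
  next
    case False
    then have "0 < s" "0 < S" using s by auto
    then show ?thesis using g1_mono_pos[of s S] s by (simp add: g1_def)
  qed
qed

lemma alg1:
  fixes a v L N :: real
  assumes "0 < a" "0 < v" "0 < L" "0 < N"
  defines "s0 \<equiv> sqrt (2 * L / (a * v * N))"
  shows "a * s0 / 2 * v + L / (s0 * N) = sqrt (2 * a * v * L / N)"
    and "a * s0 / 2 = sqrt (a * L / (2 * v * N))"
proof -
  have s0: "0 < s0" using assms by (simp add: s0_def)
  have s0sq: "s0^2 = 2 * L / (a * v * N)" using assms by (simp add: s0_def)
  have e1: "a * s0 / 2 * v = L / (s0 * N)"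
  proof -
    have "a * s0 / 2 * v * (s0 * N) = a * v * N * s0^2 / 2" by (simp add: power2_eq_square)
    also have "\<dots> = L" using assms by (simp add: s0sq)
    finally show ?thesis using s0 assms by (simp add: field_simps)
  qed
  have "sqrt (2 * a * v * L / N) = 2 * L / (s0 * N)"
  proof (rule real_sqrt_unique)
    have "(2 * L / (s0 * N))^2 = 4 * L^2 / (s0^2 * N^2)" by (simp add: power2_eq_square)
    also have "\<dots> = 2 * a * v * L / N" using assms by (simp add: s0sq power2_eq_square field_simps)
    finally show "(2 * L / (s0 * N))^2 = 2 * a * v * L / N" .
    show "0 \<le> 2 * L / (s0 * N)" using s0 assms by simp
  qed
  then show "a * s0 / 2 * v + L / (s0 * N) = sqrt (2 * a * v * L / N)" using e1 by simp
  show "a * s0 / 2 = sqrt (a * L / (2 * v * N))"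
  proof (rule real_sqrt_unique[symmetric])
    have "(a * s0 / 2)^2 = a^2 * s0^2 / 4" by (simp add: power2_eq_square)
    also have "\<dots> = a * L / (2 * v * N)" using assms by (simp add: s0sq power2_eq_square field_simps)
    finally show "(a * s0 / 2)^2 = a * L / (2 * v * N)" .
    show "0 \<le> a * s0 / 2" using s0 assms by simp
  qed
qed

lemma alg2:
  fixes b T lam \<mu> N :: real
  assumes "0 < b" "0 < T" "0 < lam" "0 < \<mu>" "0 < N"
  defines "\<beta> \<equiv> lam * sqrt (b * T * N) / \<mu>"
  shows "b * lam * T / (2 * \<beta> * \<mu>) + \<beta> * \<mu> / (2 * lam * N) = sqrt (b * T / N)"
proof -
  define r where "r = sqrt (b * T * N)"
  have r: "0 < r" using assms by (simp add: r_def)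
  have rsq: "r^2 = b * T * N" using assms by (simp add: r_def)
  have bdef: "\<beta> = lam * r / \<mu>" by (simp add: \<beta>_def r_def)
  have e1: "b * lam * T / (2 * \<beta> * \<mu>) = b * T / (2 * r)"
    using assms(1-5) r unfolding bdef by (simp add: field_simps)
  have e2: "\<beta> * \<mu> / (2 * lam * N) = r / (2 * N)"
    using assms(1-5) r unfolding bdef by (simp add: field_simps)
  have e3: "b * T / (2 * r) = r / (2 * N)"
  proof -
    have "b * T * (2 * N) = r * (2 * r)" using rsq by (simp add: power2_eq_square)
    then show ?thesis using r assms by (simp add: field_simps)
  qed
  have "sqrt (b * T / N) = r / N"
  proof (rule real_sqrt_unique)
    have "(r / N)^2 = r^2 / N^2" by (simp add: power_divide)
    also have "\<dots> = b * T / N" using assms(1-5) unfolding rsq by (simp add: power2_eq_square)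
    finally show "(r / N)^2 = b * T / N" .
    show "0 \<le> r / N" using r assms by simp
  qed
  then show ?thesis using e1 e2 e3 by simp
qed

lemma alg3:
  fixes a v L N b T \<mu> :: real
  assumes "0 < a" "0 < v" "0 < L" "0 < N" "1 \<le> b" "0 < T" "0 < \<mu>"
  defines "lam \<equiv> (1 / \<mu>) * sqrt (2 * L / (a * v * N))"
  defines "\<beta> \<equiv> lam * sqrt (b * T * N) / \<mu>"
  shows "2 / \<beta> \<le> \<mu>^2 * sqrt (2 * a * v / (T * L))"
proof (rule power2_le_imp_le)
  have lsq: "lam^2 = (1 / \<mu>^2) * (2 * L / (a * v * N))"
    using assms by (simp add: lam_def power_mult_distrib power_divide)
  have bsq: "\<beta>^2 = lam^2 * (b * T * N) / \<mu>^2"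
    using assms by (simp add: \<beta>_def power_mult_distrib power_divide)
  have lpos: "0 < lam" using assms by (simp add: lam_def)
  have bpos: "0 < \<beta>" using assms lpos by (simp add: \<beta>_def)
  have "(2 / \<beta>)^2 = 4 / \<beta>^2" by (simp add: power_divide)
  also have "\<dots> = 2 * \<mu>^4 * a * v / (L * b * T)"
    using assms by (simp add: bsq lsq field_simps power2_eq_square power4_eq_xxxx)
  also have "\<dots> \<le> 2 * \<mu>^4 * a * v / (L * T)"
  proof -
    have "L * T \<le> L * b * T" using assms by (simp add: mult_le_cancel_left1 mult_right_mono)
    then show ?thesis using assms by (intro divide_left_mono) auto
  qed
  also have "\<dots> = (\<mu>^2 * sqrt (2 * a * v / (T * L)))^2"
    using assms by (simp add: power_mult_distrib power2_eq_square power4_eq_xxxx field_simps)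
  finally show "(2 / \<beta>)^2 \<le> (\<mu>^2 * sqrt (2 * a * v / (T * L)))^2" .
  show "0 \<le> \<mu>^2 * sqrt (2 * a * v / (T * L))" using assms by simp
qed


lemma coef_eq:
  fixes p \<mu> q N :: real
  assumes "0 < p" "0 < \<mu>" "0 < q" "0 < N"
  shows "1 / (p + 1) * (p / ((p + 1) * \<mu>)) powr p * q powr (p / 2) / N powr (p / 2)
         = cp p * ((1 / \<mu>) * sqrt (q / N)) powr p"
proof -
  have s: "sqrt (q / N) powr p = q powr (p / 2) / N powr (p / 2)"
  proof -
    have "sqrt (q / N) = (q / N) powr (1/2)" using assms by (simp add: powr_half_sqrt)
    then have "sqrt (q / N) powr p = (q / N) powr (p / 2)" using assms by (simp add: powr_powr)
    then show ?thesis using assms by (simp add: powr_divide)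
  qed
  have t: "(p / ((p + 1) * \<mu>)) powr p = (p / (p + 1)) powr p * (1 / \<mu>) powr p"
  proof -
    have "(p / ((p + 1) * \<mu>)) powr p = ((p / (p + 1)) * (1 / \<mu>)) powr p" by simp
    also have "\<dots> = (p / (p + 1)) powr p * (1 / \<mu>) powr p" by (rule powr_mult)
    finally show ?thesis .
  qed
  have u: "((1 / \<mu>) * sqrt (q / N)) powr p = (1 / \<mu>) powr p * sqrt (q / N) powr p"
    by (rule powr_mult)
  show ?thesis unfolding u s t cp_def by (simp add: field_simps)
qed

context pb2
begin

lemma C_term_bound:
  assumes p: "0 < p"
  shows "ennreal (\<integral>\<omega>. alph lam (X \<omega>) * negpart (\<theta> \<bullet> (X \<omega> - u)) \<partial>M)
     \<le> ennreal (cp p * lam powr p) * (\<integral>\<^sup>+\<omega>. ennreal (norm (X \<omega>) powr p * negpart (\<theta> \<bullet> (X \<omega> - u))) \<partial>M)"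
proof -
  have nn: "0 \<le> alph lam (X \<omega>) * negpart (\<theta> \<bullet> (X \<omega> - u))" for \<omega>
    by (intro mult_nonneg_nonneg alph_nonneg[OF lam_pos]) (simp add: negpart_def)
  have "ennreal (\<integral>\<omega>. alph lam (X \<omega>) * negpart (\<theta> \<bullet> (X \<omega> - u)) \<partial>M)
      = (\<integral>\<^sup>+\<omega>. ennreal (alph lam (X \<omega>) * negpart (\<theta> \<bullet> (X \<omega> - u))) \<partial>M)"
    by (rule nn_integral_eq_integral[OF negpart_int, symmetric]) (simp add: nn)
  also have "\<dots> \<le> (\<integral>\<^sup>+\<omega>. ennreal (cp p * lam powr p) * ennreal (norm (X \<omega>) powr p * negpart (\<theta> \<bullet> (X \<omega> - u))) \<partial>M)"
  proof (rule nn_integral_mono)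
    fix \<omega>
    have ng: "0 \<le> negpart (\<theta> \<bullet> (X \<omega> - u))" by (simp add: negpart_def)
    have "alph lam (X \<omega>) * negpart (\<theta> \<bullet> (X \<omega> - u)) \<le> (cp p * lam powr p * norm (X \<omega>) powr p) * negpart (\<theta> \<bullet> (X \<omega> - u))"
      using alph_le_powr[OF p lam_pos, of "X \<omega>"] ng by (rule mult_right_mono)
    also have "\<dots> = (cp p * lam powr p) * (norm (X \<omega>) powr p * negpart (\<theta> \<bullet> (X \<omega> - u)))" by simp
    finally have le: "alph lam (X \<omega>) * negpart (\<theta> \<bullet> (X \<omega> - u)) \<le> (cp p * lam powr p) * (norm (X \<omega>) powr p * negpart (\<theta> \<bullet> (X \<omega> - u)))" .
    have "0 \<le> cp p * lam powr p" using cp_nonneg[OF p] by simp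
    moreover have "0 \<le> norm (X \<omega>) powr p * negpart (\<theta> \<bullet> (X \<omega> - u))" using ng by simp
    ultimately show "ennreal (alph lam (X \<omega>) * negpart (\<theta> \<bullet> (X \<omega> - u)))
        \<le> ennreal (cp p * lam powr p) * ennreal (norm (X \<omega>) powr p * negpart (\<theta> \<bullet> (X \<omega> - u)))"
      using le by (simp add: ennreal_mult[symmetric] ennreal_leI)
  qed
  also have "\<dots> = ennreal (cp p * lam powr p) * (\<integral>\<^sup>+\<omega>. ennreal (norm (X \<omega>) powr p * negpart (\<theta> \<bullet> (X \<omega> - u))) \<partial>M)"
    by (rule nn_integral_cmult) (simp add: negpart_def)
  finally show ?thesis .
qed

lemma Cp_term_bound:
  assumes p: "0 < p"
  shows "ennreal (\<integral>\<omega>. alph lam (X \<omega>) \<partial>M)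
     \<le> ennreal (cp p * lam powr p) * (\<integral>\<^sup>+\<omega>. ennreal (norm (X \<omega>) powr p) \<partial>M)"
proof -
  have "ennreal (\<integral>\<omega>. alph lam (X \<omega>) \<partial>M) = (\<integral>\<^sup>+\<omega>. ennreal (alph lam (X \<omega>)) \<partial>M)"
    by (rule nn_integral_eq_integral[OF alphX_int, symmetric]) (simp add: alph_nonneg lam_pos)
  also have "\<dots> \<le> (\<integral>\<^sup>+\<omega>. ennreal (cp p * lam powr p) * ennreal (norm (X \<omega>) powr p) \<partial>M)"
  proof (rule nn_integral_mono)
    fix \<omega>
    have "0 \<le> cp p * lam powr p" using cp_nonneg[OF p] by simp
    then show "ennreal (alph lam (X \<omega>)) \<le> ennreal (cp p * lam powr p) * ennreal (norm (X \<omega>) powr p)"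
      using alph_le_powr[OF p lam_pos, of "X \<omega>"] by (simp add: ennreal_mult[symmetric] ennreal_leI mult.assoc)
  qed
  also have "\<dots> = ennreal (cp p * lam powr p) * (\<integral>\<^sup>+\<omega>. ennreal (norm (X \<omega>) powr p) \<partial>M)"
    by (rule nn_integral_cmult) simp
  finally show ?thesis .
qed

end


lemma ennreal_cmult_div:
  assumes "0 \<le> x" "0 < y"
  shows "ennreal x * S / ennreal y = ennreal (x / y) * S"
proof -
  have "ennreal x * S / ennreal y = S * (ennreal x / ennreal y)"
    by (simp add: ennreal_times_divide mult.commute)
  also have "\<dots> = S * ennreal (x / y)" using assms by (simp add: divide_ennreal)
  finally show ?thesis by (simp add: mult.commute)
qed

context pb2
begin

lemma main_det:
  fixes \<delta> v \<mu> a T b \<beta> :: real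
  assumes d: "0 < \<delta>" "\<delta> < 1" and v: "0 < v" and mu: "0 < \<mu>"
    and mdef: "m = (\<integral>\<omega>. X \<omega> \<partial>M)"
    and vb: "\<forall>\<theta>. norm \<theta> = 1 \<longrightarrow> (\<integral>\<omega>. (\<theta> \<bullet> (X \<omega> - m))\<^sup>2 \<partial>M) \<le> v"
    and adef: "a = g2 (2 * \<mu>)"
    and ldef: "lam = (1 / \<mu>) * sqrt (2 * ln (1 / \<delta>) / (a * v * real n))"
    and Tdef: "T = max (\<integral>\<omega>. (norm (X \<omega> - m))\<^sup>2 \<partial>M) v"
    and bdef: "b = exp (2 * \<mu>) * g1 (\<mu>\<^sup>2 * sqrt (2 * a * v / (T * ln (1 / \<delta>))))"
    and betadef: "\<beta> = lam * sqrt (b * T * real n) / \<mu>"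
    and \<omega>: "\<omega> \<in> Good \<beta> \<delta>"
    and th: "norm \<theta> = 1"
  shows "\<theta> \<bullet> ((1 / real n) *\<^sub>R (\<Sum>i<n. thresh lam (Xs i \<omega>)) - m)
    \<le> sqrt (2 * a * v * ln (1 / \<delta>) / real n) + sqrt (b * T / real n)
       + (\<integral>\<omega>. alph lam (X \<omega>) * negpart (\<theta> \<bullet> (X \<omega> - m)) \<partial>M)
       + norm m * (1 + sqrt (a * ln (1 / \<delta>) / (2 * v * real n)) * norm m) * (\<integral>\<omega>. alph lam (X \<omega>) \<partial>M)"
proof -
  define L where "L = ln (1 / \<delta>)"
  have L: "0 < L" using d by (simp add: L_def)
  have N: "0 < real n" using n_pos by simp
  have a1: "1 \<le> a" using g2_ge1[of "2 * \<mu>"] mu adef by simp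
  have a0: "0 < a" using a1 by simp
  have vT: "v \<le> T" "0 < T" using Tdef v by auto
  have g1arg: "0 \<le> \<mu>\<^sup>2 * sqrt (2 * a * v / (T * L))" using a0 v vT L by simp
  have b1: "1 \<le> b"
  proof -
    have e: "1 \<le> exp (2 * \<mu>)" using mu by simp
    have g: "1 \<le> g1 (\<mu>\<^sup>2 * sqrt (2 * a * v / (T * L)))" using g1_ge1[OF g1arg] .
    have "1 * 1 \<le> exp (2 * \<mu>) * g1 (\<mu>\<^sup>2 * sqrt (2 * a * v / (T * L)))"
      by (rule mult_mono[OF e g]) auto
    then show ?thesis unfolding bdef L_def[symmetric] by simp
  qed
  have bpos: "0 < \<beta>" using lam_pos b1 vT N mu by (simp add: betadef)
  define c where "c = \<mu> *\<^sub>R \<theta>"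
  have nc: "norm c = \<mu>" using th mu by (simp add: c_def)
  define P where "P = \<theta> \<bullet> ((1 / real n) *\<^sub>R (\<Sum>i<n. thresh lam (Xs i \<omega>)) - EY)"
  have sumeq: "(\<Sum>i<n. c \<bullet> thresh lam (Xs i \<omega>)) - real n * (c \<bullet> EY) = \<mu> * real n * P"
  proof -
    have "\<theta> \<bullet> ((1 / real n) *\<^sub>R (\<Sum>i<n. thresh lam (Xs i \<omega>))) = (1 / real n) * (\<Sum>i<n. \<theta> \<bullet> thresh lam (Xs i \<omega>))"
      by (simp add: inner_sum_right)
    then have "P = (1 / real n) * (\<Sum>i<n. \<theta> \<bullet> thresh lam (Xs i \<omega>)) - \<theta> \<bullet> EY"
      unfolding P_def by (simp add: inner_diff_right)
    then have S: "(\<Sum>i<n. \<theta> \<bullet> thresh lam (Xs i \<omega>)) = P * real n + real n * (\<theta> \<bullet> EY)"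
      using N by (simp add: field_simps)
    have "\<mu> * real n * P = \<mu> * (\<Sum>i<n. \<theta> \<bullet> thresh lam (Xs i \<omega>)) - real n * (\<mu> * (\<theta> \<bullet> EY))"
      unfolding S by (simp add: algebra_simps)
    also have "\<dots> = (\<Sum>i<n. c \<bullet> thresh lam (Xs i \<omega>)) - real n * (c \<bullet> EY)"
      by (simp add: c_def sum_distrib_left)
    finally show ?thesis by simp
  qed
  have D: "lam * (\<mu> * real n * P) - real n * (Q \<beta> c - 1) - \<beta> * \<mu>^2 / 2 < L"
    using step_D[OF bpos d(1) \<omega>, of c] unfolding sumeq nc L_def .
  define V1 where "V1 = (\<integral>\<omega>. (\<theta> \<bullet> Zc \<omega>)^2 \<partial>M)"
  define V2 where "V2 = (\<integral>\<omega>. (norm (Zc \<omega>))^2 \<partial>M)"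
  define Ea where "Ea = (\<integral>\<omega>. alph lam (X \<omega>) \<partial>M)"
  have V1: "V1 \<le> v + (norm m)^2 * Ea"
    using var_inner_X[OF th, of m] vb th unfolding V1_def Ea_def by fastforce
  have V2: "V2 \<le> T"
    using var_norm_X[of m] Tdef unfolding V2_def by simp
  have V2nn: "0 \<le> V2" unfolding V2_def by simp
  have E: "Q \<beta> c - 1 \<le> g2 (2 * \<mu>) / 2 * lam^2 * \<mu>^2 * V1 + exp (2 * \<mu>) * g1 (2 / \<beta>) * lam^2 * V2 / (2 * \<beta>)"
    using step_E[OF bpos mu th] unfolding c_def V1_def V2_def .
  have g1b: "exp (2 * \<mu>) * g1 (2 / \<beta>) \<le> b"
  proof -
    have "2 / \<beta> \<le> \<mu>^2 * sqrt (2 * a * v / (T * L))"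
      using alg3[OF a0 v L N b1 vT(2) mu] unfolding ldef betadef L_def by simp
    then have "g1 (2 / \<beta>) \<le> g1 (\<mu>^2 * sqrt (2 * a * v / (T * L)))"
      using bpos by (intro g1_mono) auto
    then show ?thesis unfolding bdef L_def by simp
  qed
  define s0 where "s0 = sqrt (2 * L / (a * v * real n))"
  have s0: "0 < s0" using L a0 v N by (simp add: s0_def)
  have lmu: "lam * \<mu> = s0" using mu by (simp add: ldef s0_def L_def)
  have R1: "Q \<beta> c - 1 \<le> a / 2 * s0^2 * (v + (norm m)^2 * Ea) + b * lam^2 * T / (2 * \<beta>)"
  proof -
    have "g2 (2 * \<mu>) / 2 * lam^2 * \<mu>^2 * V1 \<le> a / 2 * s0^2 * (v + (norm m)^2 * Ea)"
    proof -
      have "g2 (2 * \<mu>) / 2 * lam^2 * \<mu>^2 * V1 = a / 2 * s0^2 * V1"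
        by (simp add: adef lmu[symmetric] power_mult_distrib)
      also have "\<dots> \<le> a / 2 * s0^2 * (v + (norm m)^2 * Ea)"
        using V1 a0 by (intro mult_left_mono) auto
      finally show ?thesis .
    qed
    moreover have "exp (2 * \<mu>) * g1 (2 / \<beta>) * lam^2 * V2 / (2 * \<beta>) \<le> b * lam^2 * T / (2 * \<beta>)"
    proof -
      have "exp (2 * \<mu>) * g1 (2 / \<beta>) * (lam^2 * V2) \<le> b * (lam^2 * T)"
        using g1b V2 V2nn b1 by (intro mult_mono) auto
      then show ?thesis using bpos by (intro divide_right_mono) (auto simp: mult.assoc)
    qed
    ultimately show ?thesis using E by linarith
  qed
  have Pbound: "P \<le> a * s0 / 2 * (v + (norm m)^2 * Ea) + b * lam * T / (2 * \<beta> * \<mu>)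
                 + \<beta> * \<mu> / (2 * lam * real n) + L / (s0 * real n)"
  proof -
    have "lam * \<mu> * real n * P < real n * (a / 2 * s0^2 * (v + (norm m)^2 * Ea) + b * lam^2 * T / (2 * \<beta>))
            + \<beta> * \<mu>^2 / 2 + L"
      using D R1 N by (smt (verit) mult_left_mono mult.assoc mult.commute)
    then have "s0 * real n * P < real n * (a / 2 * s0^2 * (v + (norm m)^2 * Ea) + b * lam^2 * T / (2 * \<beta>))
            + \<beta> * \<mu>^2 / 2 + L"
      by (simp add: lmu)
    then have "P < (real n * (a / 2 * s0^2 * (v + (norm m)^2 * Ea) + b * lam^2 * T / (2 * \<beta>))
            + \<beta> * \<mu>^2 / 2 + L) / (s0 * real n)"
      using s0 N by (simp add: pos_less_divide_eq mult.commute mult.left_commute)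
    also have "\<dots> = a * s0 / 2 * (v + (norm m)^2 * Ea) + b * lam^2 * T / (2 * \<beta> * s0)
                 + \<beta> * \<mu>^2 / (2 * s0 * real n) + L / (s0 * real n)"
      using s0 N bpos by (simp add: field_simps power2_eq_square)
    also have "b * lam^2 * T / (2 * \<beta> * s0) = b * lam * T / (2 * \<beta> * \<mu>)"
      using lam_pos mu bpos by (simp add: lmu[symmetric] power2_eq_square field_simps)
    also have "\<beta> * \<mu>^2 / (2 * s0 * real n) = \<beta> * \<mu> / (2 * lam * real n)"
      using lam_pos mu N by (simp add: lmu[symmetric] power2_eq_square field_simps)
    finally show ?thesis by simp
  qed
  have id1: "a * s0 / 2 * v + L / (s0 * real n) = sqrt (2 * a * v * L / real n)"
    and id2: "a * s0 / 2 = sqrt (a * L / (2 * v * real n))"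
    using alg1[OF a0 v L N] unfolding s0_def by auto
  have id3: "b * lam * T / (2 * \<beta> * \<mu>) + \<beta> * \<mu> / (2 * lam * real n) = sqrt (b * T / real n)"
    using alg2[of b T lam \<mu> "real n"] b1 vT lam_pos mu N unfolding betadef by simp
  have bias: "\<theta> \<bullet> (EY - m) \<le> (\<integral>\<omega>. alph lam (X \<omega>) * negpart (\<theta> \<bullet> (X \<omega> - m)) \<partial>M) + norm m * Ea"
    using bias_bound[OF mdef th] unfolding Ea_def .
  have split: "\<theta> \<bullet> ((1 / real n) *\<^sub>R (\<Sum>i<n. thresh lam (Xs i \<omega>)) - m) = P + \<theta> \<bullet> (EY - m)"
    unfolding P_def by (simp add: inner_diff_right)
  have "P \<le> sqrt (2 * a * v * L / real n) + sqrt (b * T / real n) + sqrt (a * L / (2 * v * real n)) * (norm m)^2 * Ea"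
    using Pbound id1 id2 id3 by (simp add: algebra_simps)
  then show ?thesis
    unfolding split L_def[symmetric] Ea_def[symmetric] using bias
    by (simp add: algebra_simps power2_eq_square)
qed

end

theorem proposition2p1:
  fixes M :: "'a measure"
    and X :: "'a \<Rightarrow> 'd::euclidean_space"
    and Xs :: "nat \<Rightarrow> 'a \<Rightarrow> 'd"
    and n :: nat and a lam T b :: real and mhat :: "'a \<Rightarrow> 'd"
    and coef :: "real \<Rightarrow> real" and C C' :: "real \<Rightarrow> ennreal" and B :: ennreal and \<delta> v \<mu> :: real and m :: 'd
  assumes P: "prob_space M"
    and X_meas: "X \<in> borel_measurable M"
    and X_sq: "integrable M (\<lambda>\<omega>. (norm (X \<omega>))\<^sup>2)"
    and m_def: "m = (\<integral>\<omega>. X \<omega> \<partial>M)"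
    and n_pos: "n \<ge> 1"
    and Xs_meas: "\<And>i. i < n \<Longrightarrow> Xs i \<in> borel_measurable M"
    and Xs_distr: "\<And>i. i < n \<Longrightarrow> distr M borel (Xs i) = distr M borel X"
    and Xs_indep: "prob_space.indep_vars M (\<lambda>_. borel) Xs {..<n}"
    and \<delta>: "0 < \<delta>" "\<delta> < 1"
    and v_pos: "0 < v"
    and v_bound: "\<forall>\<theta>::'d. norm \<theta> = 1 \<longrightarrow> (\<integral>\<omega>. (\<theta> \<bullet> (X \<omega> - m))\<^sup>2 \<partial>M) \<le> v"
    and \<mu>: "0 < \<mu>"
  assumes a_def: "a = g2 (2 * \<mu>)"
    and lam_def: "lam = (1 / \<mu>) * sqrt (2 * ln (1 / \<delta>) / (a * v * real n))"
    and T_def: "T = max (\<integral>\<omega>. (norm (X \<omega> - m))\<^sup>2 \<partial>M) v"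
    and b_def: "b = exp (2 * \<mu>) * g1 (\<mu>\<^sup>2 * sqrt (2 * a * v / (T * ln (1 / \<delta>))))"
    and mhat_def: "mhat = (\<lambda>\<omega>. (1 / real n) *\<^sub>R (\<Sum>i<n. thresh lam (Xs i \<omega>)))"
    and coef_def: "coef = (\<lambda>p::real. 1 / (p + 1) * (p / ((p + 1) * \<mu>)) powr p
                    * (2 * ln (1 / \<delta>) / (a * v)) powr (p / 2))"
    and C_def: "C = (\<lambda>p::real. ennreal (coef p) *
                 (SUP \<theta>\<in>{\<theta>::'d. norm \<theta> = 1}.
                    \<integral>\<^sup>+\<omega>. ennreal (norm (X \<omega>) powr p * negpart (\<theta> \<bullet> (X \<omega> - m))) \<partial>M))"
    and Cp_def: "C' = (\<lambda>p::real. ennreal (coef p) *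
                 (\<integral>\<^sup>+\<omega>. ennreal (norm (X \<omega>) powr p) \<partial>M) *
                 ennreal (norm m * (1 + sqrt (a * ln (1 / \<delta>) / (2 * v * real n)) * norm m)))"
    and B_def: "B = ennreal (sqrt (2 * a * v * ln (1 / \<delta>) / real n)) + ennreal (sqrt (b * T / real n))
             + (INF p\<in>{1..}. C p / ennreal (real n powr (p / 2)))
             + (INF p\<in>{2..}. C' p / ennreal (real n powr (p / 2)))"
  shows "measure M {\<omega> \<in> space M. ennreal (norm (mhat \<omega> - m)) \<le> B} \<ge> 1 - \<delta>"
proof -
  define L where "L = ln (1 / \<delta>)"
  have L: "0 < L" using \<delta> by (simp add: L_def)
  have N: "0 < real n" using n_pos by simp
  have a1: "1 \<le> a" using g2_ge1[of "2 * \<mu>"] \<mu> a_def by simp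
  have a0: "0 < a" using a1 by simp
  have lam_pos: "0 < lam" using L a0 v_pos N \<mu> by (simp add: lam_def L_def[symmetric])
  interpret pb2 M X Xs n lam
    by (intro pb2.intro pb.intro pb_axioms.intro pb2_axioms.intro)
       (use P X_meas X_sq n_pos Xs_meas Xs_distr Xs_indep lam_pos in auto)
  have vT: "v \<le> T" "0 < T" using T_def v_pos by auto
  have g1arg: "0 \<le> \<mu>\<^sup>2 * sqrt (2 * a * v / (T * L))" using a0 v_pos vT L by simp
  have b1: "1 \<le> b"
  proof -
    have e: "1 \<le> exp (2 * \<mu>)" using \<mu> by simp
    have g: "1 \<le> g1 (\<mu>\<^sup>2 * sqrt (2 * a * v / (T * L)))" using g1_ge1[OF g1arg] .
    have "1 * 1 \<le> exp (2 * \<mu>) * g1 (\<mu>\<^sup>2 * sqrt (2 * a * v / (T * L)))"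
      by (rule mult_mono[OF e g]) auto
    then show ?thesis unfolding b_def L_def[symmetric] by simp
  qed
  define \<beta> where "\<beta> = lam * sqrt (b * T * real n) / \<mu>"
  have bpos: "0 < \<beta>" using lam_pos b1 vT N \<mu> by (simp add: \<beta>_def)
  have G: "Good \<beta> \<delta> \<in> sets M" "1 - \<delta> \<le> prob (Good \<beta> \<delta>)"
    using step_C[OF bpos \<delta>(1)] by auto
  have mhat_meas: "mhat \<in> borel_measurable M"
  proof -
    have "(\<lambda>\<omega>. \<Sum>i<n. thresh lam (Xs i \<omega>)) \<in> borel_measurable M"
      by (rule borel_measurable_sum) (use Xs_meas in simp)
    then show ?thesis unfolding mhat_def by simp
  qed
  define tgt where "tgt = {\<omega> \<in> space M. ennreal (norm (mhat \<omega> - m)) \<le> B}"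
  have tgt_sets: "tgt \<in> sets M" unfolding tgt_def using mhat_meas by measurable
  define q where "q = 2 * ln (1 / \<delta>) / (a * v)"
  have q: "0 < q" using L a0 v_pos by (simp add: q_def L_def)
  have lam_q: "lam = (1 / \<mu>) * sqrt (q / real n)"
    unfolding lam_def q_def by (simp add: field_simps)
  have coefeq: "coef p / real n powr (p / 2) = cp p * lam powr p" if p: "0 < p" for p
    unfolding coef_def q_def[symmetric] lam_q using coef_eq[OF p \<mu> q N] by simp
  have coefnn: "0 \<le> coef p" if p: "0 < p" for p
    unfolding coef_def using p by simp
  have Npos: "0 < real n powr (p / 2)" for p using N by simp
  have sub: "Good \<beta> \<delta> \<subseteq> tgt"
  proof
    fix \<omega> assume \<omega>: "\<omega> \<in> Good \<beta> \<delta>"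
    then have \<omega>sp: "\<omega> \<in> space M" by (simp add: Good_def)
    define dv where "dv = mhat \<omega> - m"
    have "ennreal (norm dv) \<le> B"
    proof (cases "dv = 0")
      case True then show ?thesis by simp
    next
      case False
      define \<theta> where "\<theta> = (1 / norm dv) *\<^sub>R dv"
      have th: "norm \<theta> = 1" using False by (simp add: \<theta>_def)
      have ndv: "norm dv = \<theta> \<bullet> dv"
        using False by (simp add: \<theta>_def power2_norm_eq_inner[symmetric] power2_eq_square)
      define A1 where "A1 = (\<integral>\<omega>. alph lam (X \<omega>) * negpart (\<theta> \<bullet> (X \<omega> - m)) \<partial>M)"
      define Ea where "Ea = (\<integral>\<omega>. alph lam (X \<omega>) \<partial>M)"
      define K0 where "K0 = norm m * (1 + sqrt (a * ln (1 / \<delta>) / (2 * v * real n)) * norm m)"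
      define S1 where "S1 = sqrt (2 * a * v * ln (1 / \<delta>) / real n)"
      define S2 where "S2 = sqrt (b * T / real n)"
      have md: "\<theta> \<bullet> dv \<le> S1 + S2 + A1 + K0 * Ea"
        using main_det[OF \<delta> v_pos \<mu> m_def v_bound a_def lam_def T_def b_def \<beta>_def \<omega> th]
        unfolding dv_def mhat_def S1_def S2_def A1_def K0_def Ea_def by simp
      have A1nn: "0 \<le> A1" unfolding A1_def
        by (intro integral_nonneg_AE AE_I2 mult_nonneg_nonneg alph_nonneg[OF lam_pos]) (simp add: negpart_def)
      have Eann: "0 \<le> Ea" unfolding Ea_def
        by (intro integral_nonneg_AE AE_I2 alph_nonneg[OF lam_pos])
      have K0nn: "0 \<le> K0"
      proof -
        have "0 \<le> a * ln (1 / \<delta>) / (2 * v * real n)" using a0 v_pos N L by (simp add: L_def)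
        then show ?thesis unfolding K0_def by simp
      qed
      have S1nn: "0 \<le> S1" "0 \<le> S2"
      proof -
        have "0 \<le> 2 * a * v * ln (1 / \<delta>) / real n" using a0 v_pos N L by (simp add: L_def)
        then show "0 \<le> S1" unfolding S1_def by simp
        have "0 \<le> b * T / real n" using b1 vT N by simp
        then show "0 \<le> S2" unfolding S2_def by simp
      qed
      have "ennreal (norm dv) \<le> ennreal (S1 + S2 + A1 + K0 * Ea)"
        using md ndv by (intro ennreal_leI) simp
      also have "\<dots> = ennreal S1 + ennreal S2 + ennreal A1 + ennreal (K0 * Ea)"
        using A1nn Eann K0nn S1nn by (simp add: ennreal_plus[symmetric] del: ennreal_plus)
      also have "\<dots> \<le> B"
        unfolding B_def S1_def[symmetric] S2_def[symmetric]
      proof (intro add_mono order_refl)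
        show "ennreal A1 \<le> (INF p\<in>{1..}. C p / ennreal (real n powr (p / 2)))"
        proof (rule INF_greatest)
          fix p :: real assume "p \<in> {1..}"
          then have p: "0 < p" by simp
          have "ennreal A1 \<le> ennreal (cp p * lam powr p) * (\<integral>\<^sup>+\<omega>. ennreal (norm (X \<omega>) powr p * negpart (\<theta> \<bullet> (X \<omega> - m))) \<partial>M)"
            unfolding A1_def by (rule C_term_bound[OF p])
          also have "\<dots> \<le> ennreal (cp p * lam powr p) * (SUP \<theta>\<in>{\<theta>. norm \<theta> = 1}.
                    \<integral>\<^sup>+\<omega>. ennreal (norm (X \<omega>) powr p * negpart (\<theta> \<bullet> (X \<omega> - m))) \<partial>M)"
            by (intro mult_left_mono SUP_upper) (auto simp: th)
          also have "\<dots> = C p / ennreal (real n powr (p / 2))"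
            unfolding C_def using coefnn[OF p] Npos[of p]
            by (subst ennreal_cmult_div) (auto simp: coefeq[OF p])
          finally show "ennreal A1 \<le> C p / ennreal (real n powr (p / 2))" .
        qed
        show "ennreal (K0 * Ea) \<le> (INF p\<in>{2..}. C' p / ennreal (real n powr (p / 2)))"
        proof (rule INF_greatest)
          fix p :: real assume "p \<in> {2..}"
          then have p: "0 < p" by simp
          have "ennreal (K0 * Ea) = ennreal K0 * ennreal Ea" using K0nn Eann by (simp add: ennreal_mult)
          also have "\<dots> \<le> ennreal K0 * (ennreal (cp p * lam powr p) * (\<integral>\<^sup>+\<omega>. ennreal (norm (X \<omega>) powr p) \<partial>M))"
            unfolding Ea_def by (intro mult_left_mono Cp_term_bound[OF p]) auto
          also have "\<dots> = ennreal (coef p) * (\<integral>\<^sup>+\<omega>. ennreal (norm (X \<omega>) powr p) \<partial>M) * ennreal K0 / ennreal (real n powr (p / 2))"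
            using coefnn[OF p] Npos[of p]
            by (subst mult.assoc, subst ennreal_cmult_div) (auto simp: coefeq[OF p] mult_ac)
          also have "\<dots> = C' p / ennreal (real n powr (p / 2))"
            unfolding Cp_def K0_def by simp
          finally show "ennreal (K0 * Ea) \<le> C' p / ennreal (real n powr (p / 2))" .
        qed
      qed
      finally show ?thesis .
    qed
    then show "\<omega> \<in> tgt" unfolding tgt_def dv_def using \<omega>sp by simp
  qed
  have "prob (Good \<beta> \<delta>) \<le> prob tgt"
    using sub tgt_sets by (intro finite_measure_mono) auto
  then show ?thesis using G unfolding tgt_def by simp
qed


end
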